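(* Let $B(t)=D_{\le2}(t)+t$ and let $Z(x)$ be the unique power series with $Z(0)=0$ and $Z(x)=x\,B(Z(x))$. Then $$I_0(x)=\frac{x}{1-x\,B'(Z(x))}.$$
   Context: Chord diagrams are perfect matchings of $\{1,\dots,2n\}$ counted by number of chords; connected components are those of the intersection graph (chords adjacent iff they cross, i.e. $\{a<b\},\{c<d\}$ with $a<c<b<d$ or $c<a<d<b$). $D_{\le2}(x)$ is the ordinary generating function of chord diagrams with at most two connected components (empty diagram included). $I_0(x)$ is the ordinary generating function of nonempty indecomposable chord diagrams (no $0<k<n$ with $\{1,\dots,2k\}$ a union of chords). *)

theory Defs
  imports "HOL-Computational_Algebra.Formal_Power_Series"
begin

definition chord_diagram :: "nat \<Rightarrow> (nat \<times> nat) set \<Rightarrow> bool" where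
  "chord_diagram n C \<longleftrightarrow>
     (\<forall>(a,b)\<in>C. 1 \<le> a \<and> a < b \<and> b \<le> 2*n) \<and>
     (\<forall>k\<in>{1..2*n}. \<exists>!c\<in>C. k = fst c \<or> k = snd c)"

definition crosses :: "nat \<times> nat \<Rightarrow> nat \<times> nat \<Rightarrow> bool" where
  "crosses x y \<longleftrightarrow> (case x of (a,b) \<Rightarrow> case y of (c,d) \<Rightarrow>
      (a < c \<and> c < b \<and> b < d) \<or> (c < a \<and> a < d \<and> d < b))"

definition cross_rel :: "(nat \<times> nat) set \<Rightarrow> ((nat \<times> nat) \<times> (nat \<times> nat)) set" where
  "cross_rel C = {(x,y). x \<in> C \<and> y \<in> C \<and> crosses x y}"

definition num_components :: "(nat \<times> nat) set \<Rightarrow> nat" where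
  "num_components C = card (C // ((cross_rel C)\<^sup>*))"

definition indecomposable :: "nat \<Rightarrow> (nat \<times> nat) set \<Rightarrow> bool" where
  "indecomposable n C \<longleftrightarrow> 0 < n \<and>
     \<not> (\<exists>k. 0 < k \<and> k < n \<and> (\<exists>S\<subseteq>C. {1..2*k} = (\<Union>(a,b)\<in>S. {a,b})))"

text \<open>Ordinary generating function of chord diagrams with at most two components
  (empty diagram included).\<close>
definition D_le2 :: "rat fps" where
  "D_le2 = Abs_fps (\<lambda>n. of_nat (card {C. chord_diagram n C \<and> num_components C \<le> 2}))"

definition I0 :: "rat fps" where
  "I0 = Abs_fps (\<lambda>n. of_nat (card {C. chord_diagram n C \<and> indecomposable n C}))"

end

theory Submission
  imports Defs "HOL-Library.Infinite_Set"
begin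


lemma fps_pow_nth_agree:
  fixes Z W :: "'a::comm_ring_1 fps"
  assumes "\<forall>i\<le>k. fps_nth Z i = fps_nth W i"
  shows "fps_nth (Z^j) k = fps_nth (W^j) k"
  using assms
proof (induction j arbitrary: k)
  case 0 then show ?case by simp
next
  case (Suc j)
  have "fps_nth (Z^Suc j) k = (\<Sum>i=0..k. fps_nth Z i * fps_nth (Z^j) (k-i))" by (simp add: fps_mult_nth)
  also have "\<dots> = (\<Sum>i=0..k. fps_nth W i * fps_nth (W^j) (k-i))"
    by (rule sum.cong) (use Suc in auto)
  also have "\<dots> = fps_nth (W^Suc j) k" by (simp add: fps_mult_nth)
  finally show ?case .
qed

lemma compose_nth_agree:
  fixes Z W B :: "'a::comm_ring_1 fps"
  assumes "\<forall>i\<le>k. fps_nth Z i = fps_nth W i"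
  shows "fps_nth (B oo Z) k = fps_nth (B oo W) k"
  unfolding fps_compose_nth using fps_pow_nth_agree[OF assms] by simp

lemma fixpoint_unique:
  fixes Z W B :: "'a::comm_ring_1 fps"
  assumes "Z = fps_X * (B oo Z)" "W = fps_X * (B oo W)"
  shows "Z = W"
proof -
  have "\<forall>i\<le>n. fps_nth Z i = fps_nth W i" for n
  proof (induction n)
    case 0
    then show ?case using assms by (metis fps_X_mult_nth le_zero_eq)
  next
    case (Suc n)
    have "fps_nth Z (Suc n) = fps_nth W (Suc n)"
    proof -
      have "fps_nth Z (Suc n) = fps_nth (B oo Z) n" using assms(1) by (metis fps_X_mult_nth nat.simps(3) diff_Suc_1)
      also have "\<dots> = fps_nth (B oo W) n" by (rule compose_nth_agree[OF Suc])
      also have "\<dots> = fps_nth W (Suc n)" using assms(2) by (metis fps_X_mult_nth nat.simps(3) diff_Suc_1)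
      finally show ?thesis .
    qed
    then show ?case using Suc by (auto simp: le_Suc_eq)
  qed
  then show ?thesis by (simp add: fps_eq_iff) blast
qed

lemma alg_main:
  fixes D I C E B :: "rat fps"
  assumes D0: "fps_nth D 0 = 1"
    and ode: "D - 1 = fps_X * D + 2 * fps_X^2 * fps_deriv D"
    and ID: "I * D = D - 1"
    and C0: "fps_nth C 0 = 0"
    and DC: "D = 1 + (C oo (fps_X * D^2))"
    and EC: "E = 1 + C + 2 * fps_X * C * fps_deriv C"
    and BE: "B = E + fps_X"
  shows "(\<exists>!Z :: rat fps. fps_nth Z 0 = 0 \<and> Z = fps_X * (B oo Z)) \<and>
         (\<forall>Z :: rat fps. fps_nth Z 0 = 0 \<and> Z = fps_X * (B oo Z) \<longrightarrow>
            I = fps_X / (1 - fps_X * (fps_deriv B oo Z)))"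
proof -
  define T where "T = fps_X * D^2"
  have T0: "fps_nth T 0 = 0" by (simp add: T_def)
  define c' where "c' = fps_deriv C oo T"
  have Dd: "fps_deriv D = c' * fps_deriv T"
  proof -
    have "fps_deriv D = fps_deriv (C oo T)" using DC T_def by (metis add_diff_cancel_left' fps_deriv_add fps_deriv_1 diff_zero)
    also have "\<dots> = c' * fps_deriv T" unfolding c'_def by (rule fps_compose_deriv[OF T0])
    finally show ?thesis .
  qed
  have Td: "fps_deriv T = D^2 + 2 * fps_X * D * fps_deriv D"
    by (simp add: T_def power2_eq_square algebra_simps mult_2)
  have Td00: "fps_nth (fps_deriv T) 0 = 1" using D0 by (simp add: Td power2_eq_square)
  have Td0: "fps_deriv T \<noteq> 0"
    using Td00 by (metis fps_zero_nth zero_neq_one)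
  have cT: "C oo T = D - 1" using DC T_def by (metis add_diff_cancel_left')
  have BT: "B oo T = 1 + (D - 1) + 2 * T * (D - 1) * c' + T"
    using BE EC T0 cT
    by (simp add: fps_compose_add_distrib fps_compose_mult_distrib c'_def)
  have key: "D^2 = B oo T"
  proof -
    have "fps_deriv T * D^2 = fps_deriv T * (1 + (D - 1) + 2 * T * (D - 1) * c' + T)"
    proof -
      have e1: "fps_deriv T * c' = fps_deriv D" using Dd by simp
      show ?thesis unfolding Td T_def
        using ode e1[unfolded Td] by algebra
    qed
    then show ?thesis using Td0 BT by simp
  qed
  have Tfix: "T = fps_X * (B oo T)" using key T_def by simp
  show ?thesis
  proof (intro conjI allI impI)
    show "\<exists>!Z :: rat fps. fps_nth Z 0 = 0 \<and> Z = fps_X * (B oo Z)"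
      using T0 Tfix fixpoint_unique by blast
  next
    fix Z :: "rat fps" assume Z: "fps_nth Z 0 = 0 \<and> Z = fps_X * (B oo Z)"
    then have ZT: "Z = T" using Tfix fixpoint_unique by blast
    define W where "W = 1 - fps_X * (fps_deriv B oo T)"
    have W0: "fps_nth W 0 = 1" by (simp add: W_def)
    have TW: "fps_deriv T * W = D^2"
    proof -
      have "fps_deriv T = fps_deriv (fps_X * (B oo T))" using Tfix by simp
      also have "\<dots> = (B oo T) + fps_X * ((fps_deriv B oo T) * fps_deriv T)"
        by (simp add: fps_compose_deriv[OF T0])
      finally show ?thesis unfolding W_def using key by (simp add: algebra_simps)
    qed
    have IW: "I * W = fps_X"
    proof -
      have "fps_deriv T * (I * W) = fps_deriv T * fps_X"
      proof -
        have "fps_deriv T * (I * W) = I * D * D" using TW by (simp add: algebra_simps power2_eq_square)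
        also have "\<dots> = (D - 1) * D" using ID by simp
        also have "\<dots> = fps_deriv T * fps_X" unfolding Td using ode by algebra
        finally show ?thesis .
      qed
      then show ?thesis using Td0 by simp
    qed
    have "fps_X / W = I * W * inverse W" using IW W0 by (simp add: fps_divide_unit)
    also have "\<dots> = I" using W0 inverse_mult_eq_1'[of W] by (simp add: mult.assoc)
    finally show "I = fps_X / (1 - fps_X * (fps_deriv B oo Z))" using ZT W_def by simp
  qed
qed


definition matching :: "nat set \<Rightarrow> (nat \<times> nat) set \<Rightarrow> bool" where
  "matching P C \<longleftrightarrow> (\<forall>c\<in>C. fst c < snd c \<and> fst c \<in> P \<and> snd c \<in> P) \<and>
     (\<forall>k\<in>P. \<exists>!c\<in>C. k = fst c \<or> k = snd c)"

definition ends :: "nat \<times> nat \<Rightarrow> nat set" where "ends c = {fst c, snd c}"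
definition pts :: "(nat \<times> nat) set \<Rightarrow> nat set" where "pts C = \<Union>(ends ` C)"

lemma in_pts: "k \<in> pts C \<longleftrightarrow> (\<exists>c\<in>C. k = fst c \<or> k = snd c)"
  by (auto simp: pts_def ends_def)

lemma pts_union[simp]: "pts (A \<union> B) = pts A \<union> pts B" by (auto simp: pts_def)
lemma pts_empty[simp]: "pts {} = {}" by (auto simp: pts_def)
lemma pts_insert[simp]: "pts (insert c A) = {fst c, snd c} \<union> pts A" by (auto simp: pts_def ends_def)
lemma pts_mono: "A \<subseteq> B \<Longrightarrow> pts A \<subseteq> pts B" by (auto simp: pts_def)

definition disj :: "(nat \<times> nat) set \<Rightarrow> bool" where
  "disj C \<longleftrightarrow> (\<forall>c\<in>C. \<forall>d\<in>C. c \<noteq> d \<longrightarrow> ends c \<inter> ends d = {})"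

lemma matching_iff:
  "matching P C \<longleftrightarrow> (\<forall>c\<in>C. fst c < snd c) \<and> pts C = P \<and> disj C"
proof
  assume m: "matching P C"
  have "pts C = P"
    using m unfolding matching_def in_pts set_eq_iff by blast
  moreover have "disj C"
    unfolding disj_def ends_def
  proof (intro ballI impI)
    fix c d assume cd: "c \<in> C" "d \<in> C" "c \<noteq> d"
    show "{fst c, snd c} \<inter> {fst d, snd d} = {}"
    proof (rule ccontr)
      assume "{fst c, snd c} \<inter> {fst d, snd d} \<noteq> {}"
      then obtain k where k: "k \<in> {fst c, snd c}" "k \<in> {fst d, snd d}" by blast
      have "k \<in> P" using k m cd unfolding matching_def by auto
      then have "\<exists>!e\<in>C. k = fst e \<or> k = snd e" using m unfolding matching_def by blast
      then show False using k cd by auto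
    qed
  qed
  ultimately show "(\<forall>c\<in>C. fst c < snd c) \<and> pts C = P \<and> disj C"
    using m unfolding matching_def by blast
next
  assume h: "(\<forall>c\<in>C. fst c < snd c) \<and> pts C = P \<and> disj C"
  show "matching P C"
    unfolding matching_def
  proof (intro conjI)
    show "\<forall>c\<in>C. fst c < snd c \<and> fst c \<in> P \<and> snd c \<in> P" using h in_pts by blast
  next
    show "\<forall>k\<in>P. \<exists>!c\<in>C. k = fst c \<or> k = snd c"
    proof
    fix k assume "k \<in> P"
    then obtain c where c: "c \<in> C" "k = fst c \<or> k = snd c" using h in_pts by blast
    have "d = c" if "d \<in> C" "k = fst d \<or> k = snd d" for d
    proof (rule ccontr)
      assume "d \<noteq> c"
      then have "ends d \<inter> ends c = {}" using h that(1) c(1) unfolding disj_def by blast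
      then show False using that(2) c(2) unfolding ends_def by auto
    qed
    then show "\<exists>!c\<in>C. k = fst c \<or> k = snd c" using c by blast
  qed
  qed
qed

lemma disj_subset: "disj C \<Longrightarrow> A \<subseteq> C \<Longrightarrow> disj A"
  unfolding disj_def by blast

lemma matching_subset: "matching P C \<Longrightarrow> A \<subseteq> C \<Longrightarrow> matching (pts A) A"
  unfolding matching_iff using disj_subset by blast

lemma pts_diff:
  assumes "disj C" "A \<subseteq> C" shows "pts (C - A) = pts C - pts A"
proof
  show "pts (C - A) \<subseteq> pts C - pts A"
  proof
    fix k assume "k \<in> pts (C - A)"
    then obtain c where c: "c \<in> C - A" "k \<in> ends c" unfolding pts_def by blast
    have "k \<notin> ends d" if "d \<in> A" for d
    proof -
      have "c \<noteq> d" using c that by blast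
      then have "ends c \<inter> ends d = {}" using assms c that unfolding disj_def by blast
      then show ?thesis using c by blast
    qed
    then show "k \<in> pts C - pts A" using c unfolding pts_def by blast
  qed
  show "pts C - pts A \<subseteq> pts (C - A)" unfolding pts_def by blast
qed

lemma matching_diff: "matching P C \<Longrightarrow> A \<subseteq> C \<Longrightarrow> matching (P - pts A) (C - A)"
proof -
  assume m: "matching P C" and A: "A \<subseteq> C"
  have "disj C" "pts C = P" using m by (auto simp: matching_iff)
  then have "disj (C - A)" "pts (C - A) = P - pts A" using disj_subset pts_diff A by auto
  then show ?thesis using m unfolding matching_iff by auto
qed

lemma matching_union:
  assumes "matching P1 C1" "matching P2 C2" "P1 \<inter> P2 = {}"
  shows "matching (P1 \<union> P2) (C1 \<union> C2)"
proof -
  have "disj (C1 \<union> C2)"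
    unfolding disj_def
  proof (intro ballI impI)
    fix c d assume cd: "c \<in> C1 \<union> C2" "d \<in> C1 \<union> C2" "c \<noteq> d"
    have e1: "c \<in> C1 \<Longrightarrow> ends c \<subseteq> P1" "d \<in> C1 \<Longrightarrow> ends d \<subseteq> P1"
      "c \<in> C2 \<Longrightarrow> ends c \<subseteq> P2" "d \<in> C2 \<Longrightarrow> ends d \<subseteq> P2"
      using assms unfolding matching_iff pts_def by auto
    show "ends c \<inter> ends d = {}"
      using cd e1 assms unfolding matching_iff disj_def by blast
  qed
  then show ?thesis using assms unfolding matching_iff by auto
qed

lemma matching_pts: "matching P C \<Longrightarrow> pts C = P"
  by (simp add: matching_iff)

lemma matching_sub_PP: "matching P C \<Longrightarrow> C \<subseteq> P \<times> P"
  unfolding matching_def by (auto simp: mem_Times_iff)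

lemma matching_finite: "finite P \<Longrightarrow> matching P C \<Longrightarrow> finite C"
  using matching_sub_PP finite_subset by blast

lemma finite_matchings: "finite P \<Longrightarrow> finite {C. matching P C}"
proof -
  assume "finite P"
  then have "{C. matching P C} \<subseteq> Pow (P \<times> P)" using matching_sub_PP by blast
  then show ?thesis using \<open>finite P\<close> finite_subset by blast
qed

lemma matching_empty_iff: "matching P {} \<longleftrightarrow> P = {}"
  by (auto simp: matching_iff disj_def)

lemma matching_emptyset: "matching {} C \<longleftrightarrow> C = {}"
  by (auto simp: matching_iff pts_def ends_def disj_def)

lemma card_matching:
  assumes "finite P" "matching P C"
  shows "card P = 2 * card C"
proof -
  have fC: "finite C" using assms matching_finite by blast
  have "card P = card (\<Union>(ends ` C))" using assms matching_pts pts_def by metis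
  also have "\<dots> = (\<Sum>c\<in>C. card (ends c))"
    using assms fC unfolding matching_iff disj_def
    by (intro card_UN_disjoint) (auto simp: ends_def)
  also have "\<dots> = (\<Sum>c\<in>C. 2)"
    using assms unfolding matching_iff by (intro sum.cong) (auto simp: ends_def)
  finally show ?thesis by simp
qed

lemma matching_odd: "finite P \<Longrightarrow> odd (card P) \<Longrightarrow> \<not> matching P C"
  using card_matching by fastforce

definition fm :: "(nat \<Rightarrow> nat) \<Rightarrow> (nat \<times> nat) set \<Rightarrow> (nat \<times> nat) set" where
  "fm f C = (\<lambda>c. (f (fst c), f (snd c))) ` C"

lemma fm_inj:
  assumes "strict_mono_on P f" "C \<subseteq> P \<times> P" "D \<subseteq> P \<times> P" "fm f C = fm f D"
  shows "C = D"
proof -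
  have inj: "inj_on f P" using assms(1) strict_mono_on_imp_inj_on by blast
  have sub: "X \<subseteq> Y" if "X \<subseteq> P \<times> P" "Y \<subseteq> P \<times> P" "fm f X = fm f Y" for X Y
  proof
    fix c assume c: "c \<in> X"
    then have "(f (fst c), f (snd c)) \<in> fm f Y" using that unfolding fm_def by blast
    then obtain d where d: "d \<in> Y" "f (fst c) = f (fst d)" "f (snd c) = f (snd d)" unfolding fm_def by auto
    have "fst c \<in> P" "snd c \<in> P" "fst d \<in> P" "snd d \<in> P" using c d that by auto
    then have "fst c = fst d" "snd c = snd d" using d inj unfolding inj_on_def by auto
    then show "c \<in> Y" using d by (metis prod.collapse)
  qed
  show ?thesis using sub assms by blast
qed

lemma matching_fm:
  assumes f: "strict_mono_on P f" and m: "matching P C"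
  shows "matching (f ` P) (fm f C)"
proof -
  have PP: "C \<subseteq> P \<times> P" using m matching_sub_PP by blast
  have inj: "inj_on f P" using f strict_mono_on_imp_inj_on by blast
  have ord: "\<forall>c\<in>fm f C. fst c < snd c"
  proof
    fix x assume "x \<in> fm f C"
    then obtain c where c: "c \<in> C" "x = (f (fst c), f (snd c))" unfolding fm_def by blast
    have "fst c \<in> P" "snd c \<in> P" "fst c < snd c" using c PP m unfolding matching_iff by auto
    then show "fst x < snd x" using c f strict_mono_onD by fastforce
  qed
  have "pts (fm f C) = f ` pts C" unfolding fm_def pts_def ends_def by auto
  then have pp: "pts (fm f C) = f ` P" using m matching_pts by simp
  have "disj (fm f C)"
    unfolding disj_def fm_def
  proof (intro ballI impI)
    fix x y assume xy: "x \<in> (\<lambda>c. (f (fst c), f (snd c))) ` C" "y \<in> (\<lambda>c. (f (fst c), f (snd c))) ` C" "x \<noteq> y"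
    then obtain c d where cd: "c \<in> C" "d \<in> C" "x = (f (fst c), f (snd c))" "y = (f (fst d), f (snd d))" by blast
    then have "c \<noteq> d" using xy by auto
    then have "ends c \<inter> ends d = {}" using m cd unfolding matching_iff disj_def by blast
    moreover have "ends c \<subseteq> P" "ends d \<subseteq> P" using PP cd unfolding ends_def by auto
    ultimately have "f ` ends c \<inter> f ` ends d = {}" using inj inj_on_image_Int[of f P "ends c" "ends d"] by simp
    then show "ends x \<inter> ends y = {}" using cd unfolding ends_def by auto
  qed
  then show ?thesis using ord pp unfolding matching_iff by blast
qed

lemma matching_fm_surj:
  assumes f: "strict_mono_on P f" and m: "matching (f ` P) C'"
  shows "\<exists>C. matching P C \<and> fm f C = C'"
proof -
  define C where "C = {c \<in> P \<times> P. (f (fst c), f (snd c)) \<in> C'}"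
  have PP': "C' \<subseteq> f ` P \<times> f ` P" using m matching_sub_PP by blast
  have inj: "inj_on f P" using f strict_mono_on_imp_inj_on by blast
  have eq: "fm f C = C'"
  proof
    show "fm f C \<subseteq> C'" unfolding fm_def C_def by auto
    show "C' \<subseteq> fm f C"
    proof
      fix x assume x: "x \<in> C'"
      then obtain a b where ab: "a \<in> P" "b \<in> P" "x = (f a, f b)" using PP' by blast
      then have "(a,b) \<in> C" unfolding C_def using x by simp
      then show "x \<in> fm f C" unfolding fm_def using ab by force
    qed
  qed
  have ord: "\<forall>c\<in>C. fst c < snd c"
  proof
    fix c assume c: "c \<in> C"
    then have c': "(f (fst c), f (snd c)) \<in> C'" and cP: "fst c \<in> P" "snd c \<in> P" unfolding C_def by auto
    have "f (fst c) < f (snd c)" using m c' unfolding matching_iff by fastforce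
    then show "fst c < snd c" using cP f by (simp add: strict_mono_on_less)
  qed
  have pp: "pts C = P"
  proof
    show "pts C \<subseteq> P" unfolding C_def pts_def ends_def by auto
    show "P \<subseteq> pts C"
    proof
      fix k assume k: "k \<in> P"
      then have "f k \<in> pts C'" using m matching_pts by blast
      then obtain x where x: "x \<in> C'" "f k = fst x \<or> f k = snd x" using in_pts by blast
      then obtain a b where ab: "a \<in> P" "b \<in> P" "x = (f a, f b)" using PP' by blast
      then have abC: "(a,b) \<in> C" using x unfolding C_def by simp
      have "f k = f a \<or> f k = f b" using x ab by simp
      then have "k = a \<or> k = b" using ab k inj unfolding inj_on_def by blast
      then show "k \<in> pts C" using abC in_pts by (metis fst_conv snd_conv)
    qed
  qed
  have dj: "disj C"
    unfolding disj_def
  proof (intro ballI impI)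
    fix c d assume cd: "c \<in> C" "d \<in> C" "c \<noteq> d"
    have cP: "fst c \<in> P" "snd c \<in> P" "fst d \<in> P" "snd d \<in> P" using cd unfolding C_def by auto
    have "(f (fst c), f (snd c)) \<noteq> (f (fst d), f (snd d))"
    proof
      assume "(f (fst c), f (snd c)) = (f (fst d), f (snd d))"
      then have "fst c = fst d" "snd c = snd d" using cP inj unfolding inj_on_def by auto
      then show False using cd(3) by (simp add: prod_eq_iff)
    qed
    moreover have "(f (fst c), f (snd c)) \<in> C'" "(f (fst d), f (snd d)) \<in> C'" using cd unfolding C_def by auto
    ultimately have "ends (f (fst c), f (snd c)) \<inter> ends (f (fst d), f (snd d)) = {}"
      using m unfolding matching_iff disj_def by blast
    then have "f ` ends c \<inter> f ` ends d = {}" unfolding ends_def by auto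
    then show "ends c \<inter> ends d = {}" by blast
  qed
  have "matching P C" using ord pp dj unfolding matching_iff by blast
  then show ?thesis using eq by blast
qed

lemma card_matching_fm:
  assumes f: "strict_mono_on P f"
    and Q: "\<And>C. matching P C \<Longrightarrow> Q' (fm f C) \<longleftrightarrow> Q C"
  shows "card {C. matching P C \<and> Q C} = card {C'. matching (f ` P) C' \<and> Q' C'}"
proof (rule bij_betw_same_card[of "fm f"])
  show "bij_betw (fm f) {C. matching P C \<and> Q C} {C'. matching (f ` P) C' \<and> Q' C'}"
    unfolding bij_betw_def
  proof
    show "inj_on (fm f) {C. matching P C \<and> Q C}"
      using fm_inj[OF f] matching_sub_PP unfolding inj_on_def by blast
    show "fm f ` {C. matching P C \<and> Q C} = {C'. matching (f ` P) C' \<and> Q' C'}"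
    proof
      show "fm f ` {C. matching P C \<and> Q C} \<subseteq> {C'. matching (f ` P) C' \<and> Q' C'}"
        using matching_fm[OF f] Q by auto
      show "{C'. matching (f ` P) C' \<and> Q' C'} \<subseteq> fm f ` {C. matching P C \<and> Q C}"
      proof
        fix C' assume "C' \<in> {C'. matching (f ` P) C' \<and> Q' C'}"
        then obtain C where "matching P C" "fm f C = C'" "Q' C'" using matching_fm_surj[OF f] by blast
        then show "C' \<in> fm f ` {C. matching P C \<and> Q C}" using Q by auto
      qed
    qed
  qed
qed


definition noncross :: "(nat \<times> nat) set \<Rightarrow> (nat \<times> nat) set \<Rightarrow> bool" where
  "noncross A B \<longleftrightarrow> (\<forall>x\<in>A. \<forall>y\<in>B. \<not> crosses x y)"

lemma crosses_sym: "crosses x y \<Longrightarrow> crosses y x"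
  unfolding crosses_def by (auto split: prod.splits)

lemma noncross_sym: "noncross A B \<Longrightarrow> noncross B A"
  unfolding noncross_def using crosses_sym by blast

lemma cross_rel_iff: "(x,y) \<in> cross_rel C \<longleftrightarrow> x \<in> C \<and> y \<in> C \<and> crosses x y"
  by (simp add: cross_rel_def)

lemma cross_rel_converse: "(cross_rel C)\<inverse> = cross_rel C"
  unfolding cross_rel_def using crosses_sym by auto

lemma rtrancl_cross_sym: "(x,y) \<in> (cross_rel C)\<^sup>* \<Longrightarrow> (y,x) \<in> (cross_rel C)\<^sup>*"
  by (metis cross_rel_converse converse_iff rtrancl_converse)

definition cls :: "(nat \<times> nat) set \<Rightarrow> nat \<times> nat \<Rightarrow> (nat \<times> nat) set" where
  "cls C x = (cross_rel C)\<^sup>* `` {x}"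

lemma closed_reach:
  assumes "noncross X (G - X)" "x \<in> X" "(x,y) \<in> (cross_rel G)\<^sup>*"
  shows "y \<in> X \<and> (x,y) \<in> (cross_rel X)\<^sup>*"
  using assms(3)
proof (induction rule: rtrancl_induct)
  case base then show ?case using assms by simp
next
  case (step y z)
  then have yX: "y \<in> X" and yz: "y \<in> G" "z \<in> G" "crosses y z" by (auto simp: cross_rel_iff)
  have zX: "z \<in> X"
  proof (rule ccontr)
    assume "z \<notin> X"
    then show False using assms(1) yX yz unfolding noncross_def by blast
  qed
  have "(y,z) \<in> cross_rel X" using yX zX yz by (simp add: cross_rel_iff)
  then show ?case using step zX by (meson rtrancl.rtrancl_into_rtrancl)
qed

lemma cross_rel_mono: "A \<subseteq> G \<Longrightarrow> cross_rel A \<subseteq> cross_rel G"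
  unfolding cross_rel_def by auto

lemma closed_cls:
  assumes "A \<subseteq> G" "noncross A (G - A)" "x \<in> A"
  shows "cls G x = cls A x"
proof
  show "cls G x \<subseteq> cls A x" unfolding cls_def using closed_reach[OF assms(2,3)] by blast
  show "cls A x \<subseteq> cls G x" unfolding cls_def using rtrancl_mono[OF cross_rel_mono[OF assms(1)]] by blast
qed

lemma cls_sub: "x \<in> C \<Longrightarrow> cls C x \<subseteq> C"
proof
  fix y assume x: "x \<in> C" and "y \<in> cls C x"
  then have "(x,y) \<in> (cross_rel C)\<^sup>*" by (simp add: cls_def)
  then show "y \<in> C" using x by (induction rule: rtrancl_induct) (auto simp: cross_rel_iff)
qed

lemma cls_self: "x \<in> cls C x" by (simp add: cls_def)

lemma cls_closed:
  assumes "x \<in> G" shows "noncross (cls G x) (G - cls G x)"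
  unfolding noncross_def
proof (intro ballI notI)
  fix y z assume y: "y \<in> cls G x" and z: "z \<in> G - cls G x" and c: "crosses y z"
  have "y \<in> G" using y cls_sub assms by blast
  then have "(y,z) \<in> cross_rel G" using z c by (simp add: cross_rel_iff)
  then have "(x,z) \<in> (cross_rel G)\<^sup>*" using y unfolding cls_def by (simp add: rtrancl.rtrancl_into_rtrancl)
  then show False using z unfolding cls_def by simp
qed

lemma quotient_cls: "C // (cross_rel C)\<^sup>* = cls C ` C"
  unfolding quotient_def cls_def by auto

lemma comps_cls: "num_components C = card (cls C ` C)"
  unfolding num_components_def quotient_cls ..

lemma comps_union:
  assumes fin: "finite A" "finite B" and dis: "A \<inter> B = {}" and nc: "noncross A B"
  shows "num_components (A \<union> B) = num_components A + num_components B"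
proof -
  have e1: "(A \<union> B) - A = B" "(A \<union> B) - B = A" using dis by blast+
  have ncA: "noncross A ((A \<union> B) - A)" using nc e1 by simp
  have ncB: "noncross B ((A \<union> B) - B)" using noncross_sym[OF nc] e1 by simp
  have eA: "cls (A \<union> B) ` A = cls A ` A" using closed_cls[OF _ ncA] by auto
  have eB: "cls (A \<union> B) ` B = cls B ` B" using closed_cls[OF _ ncB] by auto
  have "cls (A \<union> B) ` (A \<union> B) = cls A ` A \<union> cls B ` B" using eA eB by (simp add: image_Un)
  moreover have "cls A ` A \<inter> cls B ` B = {}"
  proof (rule ccontr)
    assume "cls A ` A \<inter> cls B ` B \<noteq> {}"
    then obtain a b where ab: "a \<in> A" "b \<in> B" "cls A a = cls B b" by blast
    then have "a \<in> cls B b" using cls_self by metis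
    then have "a \<in> B" using cls_sub ab by blast
    then show False using ab dis by blast
  qed
  ultimately show ?thesis unfolding comps_cls using fin by (simp add: card_Un_disjoint)
qed

lemma comps_empty[simp]: "num_components {} = 0"
  unfolding comps_cls by simp

lemma comps_pos: "finite C \<Longrightarrow> C \<noteq> {} \<Longrightarrow> num_components C \<ge> 1"
  unfolding comps_cls by (simp add: Suc_le_eq card_gt_0_iff)

lemma comps_zero_iff: "finite C \<Longrightarrow> num_components C = 0 \<longleftrightarrow> C = {}"
proof
  assume "finite C" "num_components C = 0"
  then show "C = {}" using comps_pos[of C] by (cases "C = {}") auto
qed simp

definition connected :: "(nat \<times> nat) set \<Rightarrow> bool" where
  "connected C \<longleftrightarrow> C \<noteq> {} \<and> (\<forall>X\<subseteq>C. X \<noteq> {} \<longrightarrow> noncross X (C - X) \<longrightarrow> X = C)"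

lemma conn_cls0:
  assumes c: "connected C" and x: "x \<in> C" shows "cls C x = C"
proof -
  have all: "\<forall>X\<subseteq>C. X \<noteq> {} \<longrightarrow> noncross X (C - X) \<longrightarrow> X = C" using c unfolding connected_def by blast
  have "cls C x \<subseteq> C" "cls C x \<noteq> {}" "noncross (cls C x) (C - cls C x)"
    using cls_sub[OF x] cls_self[of x C] cls_closed[OF x] by auto
  then show ?thesis using all by blast
qed

lemma conn_iff:
  assumes fin: "finite C"
  shows "num_components C = 1 \<longleftrightarrow> connected C"
proof
  assume h: "num_components C = 1"
  have ne: "C \<noteq> {}" using h by auto
  have "X = C" if X: "X \<subseteq> C" "X \<noteq> {}" "noncross X (C - X)" for X
  proof (rule ccontr)
    assume "X \<noteq> C"
    then have ne2: "C - X \<noteq> {}" using X by blast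
    have fX: "finite X" "finite (C - X)" using fin X(1) finite_subset by auto
    have u: "X \<union> (C - X) = C" "X \<inter> (C - X) = {}" using X(1) by blast+
    have "num_components C = num_components X + num_components (C - X)"
      using comps_union[OF fX u(2) X(3)] u(1) by simp
    moreover have "num_components X \<ge> 1" using comps_pos X fX by blast
    moreover have "num_components (C - X) \<ge> 1" using comps_pos ne2 fin by simp
    ultimately show False using h by simp
  qed
  then show "connected C" using ne unfolding connected_def by blast
next
  assume c: "connected C"
  have "cls C x = C" if "x \<in> C" for x
    using c that by (rule conn_cls0)
  then have "cls C ` C = {C}" using c unfolding connected_def by auto
  then show "num_components C = 1" unfolding comps_cls by simp
qed

lemma conn_cls: "connected C \<Longrightarrow> x \<in> C \<Longrightarrow> cls C x = C"
  by (rule conn_cls0)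

lemma crosses_fm:
  assumes f: "strict_mono_on P f" and "fst x \<in> P" "snd x \<in> P" "fst y \<in> P" "snd y \<in> P"
  shows "crosses (f (fst x), f (snd x)) (f (fst y), f (snd y)) \<longleftrightarrow> crosses x y"
proof -
  obtain a b c d where xy: "x = (a,b)" "y = (c,d)" by (cases x, cases y) auto
  have P: "a \<in> P" "b \<in> P" "c \<in> P" "d \<in> P" using assms xy by auto
  show ?thesis unfolding xy crosses_def using P f by (simp add: strict_mono_on_less)
qed

lemma connected_fm:
  assumes f: "strict_mono_on P f" and m: "matching P C"
  shows "connected (fm f C) \<longleftrightarrow> connected C"
proof -
  have PP: "C \<subseteq> P \<times> P" using m matching_sub_PP by blast
  define g where "g = (\<lambda>c. (f (fst c), f (snd c)))"
  have fmg: "fm f X = g ` X" for X unfolding fm_def g_def by simp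
  have injf: "inj_on f P" using strict_mono_on_imp_inj_on[OF f] .
  have injC: "inj_on g C"
  proof (rule inj_onI)
    fix x y assume xy: "x \<in> C" "y \<in> C" "g x = g y"
    then have "f (fst x) = f (fst y)" "f (snd x) = f (snd y)" unfolding g_def by auto
    moreover have "fst x \<in> P" "fst y \<in> P" "snd x \<in> P" "snd y \<in> P" using xy PP by auto
    ultimately have "fst x = fst y" "snd x = snd y" using injf unfolding inj_on_def by blast+
    then show "x = y" by (simp add: prod_eq_iff)
  qed
  have cr: "crosses (g x) (g y) \<longleftrightarrow> crosses x y" if "x \<in> C" "y \<in> C" for x y
  proof -
    have "fst x \<in> P" "fst y \<in> P" "snd x \<in> P" "snd y \<in> P" using that PP by auto
    then show ?thesis unfolding g_def using crosses_fm[OF f] by blast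
  qed
  have ncX: "noncross (fm f X) (fm f Y) \<longleftrightarrow> noncross X Y" if "X \<subseteq> C" "Y \<subseteq> C" for X Y
  proof -
    have "(\<forall>x\<in>X. \<forall>y\<in>Y. \<not> crosses (g x) (g y)) \<longleftrightarrow> (\<forall>x\<in>X. \<forall>y\<in>Y. \<not> crosses x y)"
      using cr that by blast
    then show ?thesis unfolding noncross_def fmg by simp
  qed
  have diff: "fm f C - fm f X = fm f (C - X)" if "X \<subseteq> C" for X
    unfolding fmg using inj_on_image_set_diff[OF injC _ that] by simp
  show ?thesis
  proof
    assume c: "connected (fm f C)"
    have all: "\<forall>Y\<subseteq>fm f C. Y \<noteq> {} \<longrightarrow> noncross Y (fm f C - Y) \<longrightarrow> Y = fm f C"
      using c unfolding connected_def by blast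
    show "connected C" unfolding connected_def
    proof (intro conjI allI impI)
      show "C \<noteq> {}" using c unfolding connected_def fmg by auto
      fix X assume X: "X \<subseteq> C" "X \<noteq> {}" "noncross X (C - X)"
      have "fm f X \<subseteq> fm f C" "fm f X \<noteq> {}" using X unfolding fmg by auto
      moreover have "noncross (fm f X) (fm f C - fm f X)" using X ncX[of X "C - X"] diff[of X] by simp
      ultimately have "fm f X = fm f C" using all by blast
      then show "X = C" using fm_inj[OF f] X(1) PP by blast
    qed
  next
    assume c: "connected C"
    have all: "\<forall>X\<subseteq>C. X \<noteq> {} \<longrightarrow> noncross X (C - X) \<longrightarrow> X = C"
      using c unfolding connected_def by blast
    show "connected (fm f C)" unfolding connected_def
    proof (intro conjI allI impI)
      show "fm f C \<noteq> {}" using c unfolding connected_def fmg by auto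
      fix Y assume Y: "Y \<subseteq> fm f C" "Y \<noteq> {}" "noncross Y (fm f C - Y)"
      define X where "X = {c \<in> C. g c \<in> Y}"
      have XC: "X \<subseteq> C" unfolding X_def by blast
      have YX: "Y = fm f X" unfolding X_def fmg using Y(1) unfolding fmg by blast
      have "X \<noteq> {}" using Y(2) YX unfolding fmg by auto
      moreover have "noncross X (C - X)" using Y(3) YX ncX[of X "C - X"] diff[OF XC] XC by simp
      ultimately have "X = C" using all XC by blast
      then show "Y = fm f C" using YX by simp
    qed
  qed
qed


definition dd :: "nat \<Rightarrow> nat" where "dd n = card {C. matching {..<n} C}"
definition cc :: "nat \<Rightarrow> nat" where "cc n = card {C. matching {..<n} C \<and> connected C}"

lemma card_match_gen:
  assumes "finite P" shows "card {C. matching P C} = dd (card P)"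
proof -
  obtain h where h: "bij_betw h {..<card P} P" "strict_mono_on {..<card P} h"
    using ex_bij_betw_strict_mono_card[OF assms] by blast
  have hP: "h ` {..<card P} = P" using h(1) by (simp add: bij_betw_def)
  have "card {C. matching {..<card P} C \<and> True} = card {C'. matching (h ` {..<card P}) C' \<and> True}"
    by (rule card_matching_fm[OF h(2)]) simp
  then show ?thesis unfolding dd_def hP by simp
qed

lemma card_conn_gen:
  assumes "finite P" shows "card {C. matching P C \<and> connected C} = cc (card P)"
proof -
  obtain h where h: "bij_betw h {..<card P} P" "strict_mono_on {..<card P} h"
    using ex_bij_betw_strict_mono_card[OF assms] by blast
  have hP: "h ` {..<card P} = P" using h(1) by (simp add: bij_betw_def)
  have "card {C. matching {..<card P} C \<and> connected C} = card {C'. matching (h ` {..<card P}) C' \<and> connected C'}"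
    by (rule card_matching_fm[OF h(2)]) (rule connected_fm[OF h(2)])
  then show ?thesis unfolding cc_def hP by simp
qed

lemma dd_0: "dd 0 = 1"
proof -
  have e: "{C. matching {} C} = {{}}" using matching_emptyset by auto
  show ?thesis unfolding dd_def lessThan_0 e by simp
qed

lemma dd_odd: "odd n \<Longrightarrow> dd n = 0"
proof -
  assume "odd n"
  then have "{C. matching {..<n} C} = {}" using matching_odd[of "{..<n}"] by auto
  then show ?thesis unfolding dd_def by (metis card.empty)
qed

lemma cc_odd: "odd n \<Longrightarrow> cc n = 0"
proof -
  assume "odd n"
  then have "{C. matching {..<n} C \<and> connected C} = {}" using matching_odd[of "{..<n}"] by auto
  then show ?thesis unfolding cc_def by (metis card.empty)
qed

lemma cc_0: "cc 0 = 0"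
  unfolding cc_def connected_def using matching_emptyset by simp

lemma matching_single: "a < b \<Longrightarrow> matching {a,b} {(a,b)}"
  unfolding matching_iff disj_def by (auto simp: pts_def ends_def)

lemma dd_rec: "dd (Suc (Suc n)) = Suc n * dd n"
proof -
  define P where "P = {..<Suc (Suc n)}"
  define A where "A q = {C. matching P C \<and> (0,q) \<in> C}" for q
  have cover: "{C. matching P C} = (\<Union>q\<in>{1..<Suc (Suc n)}. A q)"
  proof
    show "{C. matching P C} \<subseteq> (\<Union>q\<in>{1..<Suc (Suc n)}. A q)"
    proof
      fix C assume "C \<in> {C. matching P C}"
      then have m: "matching P C" by simp
      have "0 \<in> P" unfolding P_def by simp
      then obtain c where c: "c \<in> C" "0 = fst c \<or> 0 = snd c" using m unfolding matching_def by blast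
      have cP: "fst c < snd c" "snd c \<in> P" using m c(1) unfolding matching_def by auto
      then have "0 = fst c" using c(2) by auto
      then have "(0, snd c) \<in> C" using c(1) by (metis prod.collapse)
      moreover have "snd c \<in> {1..<Suc (Suc n)}" using cP \<open>0 = fst c\<close> unfolding P_def by auto
      ultimately show "C \<in> (\<Union>q\<in>{1..<Suc (Suc n)}. A q)" unfolding A_def using m by blast
    qed
    show "(\<Union>q\<in>{1..<Suc (Suc n)}. A q) \<subseteq> {C. matching P C}" unfolding A_def by blast
  qed
  have disjA: "A q \<inter> A q' = {}" if "q \<noteq> q'" for q q'
  proof (rule ccontr)
    assume "A q \<inter> A q' \<noteq> {}"
    then obtain C where C: "matching P C" "(0,q) \<in> C" "(0,q') \<in> C" unfolding A_def by blast
    then have "ends (0,q) \<inter> ends (0,q') = {}" using that unfolding matching_iff disj_def by blast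
    then show False unfolding ends_def by auto
  qed
  have cardA: "card (A q) = dd n" if q: "q \<in> {1..<Suc (Suc n)}" for q
  proof -
    have "bij_betw (\<lambda>C. C - {(0,q)}) (A q) {C. matching (P - {0,q}) C}"
    proof (rule bij_betw_byWitness[where f' = "\<lambda>C. insert (0,q) C"])
      show "\<forall>C\<in>A q. insert (0, q) (C - {(0, q)}) = C" unfolding A_def by auto
      show "\<forall>C'\<in>{C. matching (P - {0, q}) C}. insert (0, q) C' - {(0, q)} = C'"
      proof
        fix C' assume "C' \<in> {C. matching (P - {0, q}) C}"
        then have "pts C' = P - {0,q}" using matching_pts by blast
        then have "(0,q) \<notin> C'" using in_pts[of 0 C'] by (metis DiffD2 fst_conv insertI1)
        then show "insert (0, q) C' - {(0, q)} = C'" by simp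
      qed
      show "(\<lambda>C. C - {(0, q)}) ` A q \<subseteq> {C. matching (P - {0, q}) C}"
      proof
        fix X assume "X \<in> (\<lambda>C. C - {(0, q)}) ` A q"
        then obtain C where C: "matching P C" "(0,q) \<in> C" "X = C - {(0,q)}" unfolding A_def by blast
        have "matching (P - pts {(0,q)}) (C - {(0,q)})" by (rule matching_diff[OF C(1)]) (use C(2) in blast)
        then show "X \<in> {C. matching (P - {0, q}) C}" using C(3) by simp
      qed
      show "(\<lambda>C. insert (0, q) C) ` {C. matching (P - {0, q}) C} \<subseteq> A q"
      proof
        fix X assume "X \<in> (\<lambda>C. insert (0, q) C) ` {C. matching (P - {0, q}) C}"
        then obtain C' where C': "matching (P - {0,q}) C'" "X = insert (0,q) C'" by blast
        have s: "matching {0,q} {(0,q)}" using q by (intro matching_single) auto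
        have "matching ({0,q} \<union> (P - {0,q})) ({(0,q)} \<union> C')"
          by (rule matching_union[OF s C'(1)]) auto
        moreover have "{0,q} \<union> (P - {0,q}) = P" using q unfolding P_def by auto
        ultimately show "X \<in> A q" unfolding A_def using C' by simp
      qed
    qed
    then have "card (A q) = card {C. matching (P - {0,q}) C}" by (rule bij_betw_same_card)
    also have "\<dots> = dd (card (P - {0,q}))" by (rule card_match_gen) (simp add: P_def)
    also have "card (P - {0,q}) = n"
    proof -
      have sub: "{0,q} \<subseteq> P" "finite {0,q}" using q unfolding P_def by auto
      have "card {0,q} = 2" using q by auto
      then show ?thesis using card_Diff_subset[OF sub(2) sub(1)] unfolding P_def by simp
    qed
    finally show ?thesis .
  qed
  have finA: "finite (A q)" for q
    using finite_matchings[of P] unfolding A_def P_def by (rule finite_subset[rotated]) auto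
  have "dd (Suc (Suc n)) = card (\<Union>q\<in>{1..<Suc (Suc n)}. A q)" unfolding dd_def P_def[symmetric] cover ..
  also have "\<dots> = (\<Sum>q\<in>{1..<Suc (Suc n)}. card (A q))"
    using finA disjA by (intro card_UN_disjoint) auto
  also have "\<dots> = (\<Sum>q\<in>{1..<Suc (Suc n)}. dd n)" using cardA by simp
  finally show ?thesis by simp
qed


lemma pts_alt: "(\<Union>(a,b)\<in>S. {a,b}) = pts S"
  unfolding pts_def ends_def by auto

lemma cd_iff: "chord_diagram n C \<longleftrightarrow> matching {1..2*n} C"
  unfolding chord_diagram_def matching_def by (auto split: prod.splits)

lemma card_cd: "card {C. chord_diagram n C} = dd (2*n)"
  unfolding cd_iff by (subst card_match_gen) auto

definition pre :: "(nat \<times> nat) set \<Rightarrow> nat \<Rightarrow> bool" where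
  "pre C k \<longleftrightarrow> (\<exists>S\<subseteq>C. {1..2*k} = pts S)"

lemma indec_iff: "indecomposable k C \<longleftrightarrow> 0 < k \<and> \<not> (\<exists>j. 0 < j \<and> j < k \<and> pre C j)"
  unfolding indecomposable_def pre_def pts_alt ..

definition first :: "(nat \<times> nat) set \<Rightarrow> nat \<Rightarrow> bool" where
  "first C k \<longleftrightarrow> 0 < k \<and> pre C k \<and> (\<forall>j. 0 < j \<and> j < k \<longrightarrow> \<not> pre C j)"

lemma pre_union:
  assumes m1: "matching {1..2*k} C1" and m2: "matching {2*k+1..2*n} C2" and j: "j \<le> k"
  shows "pre (C1 \<union> C2) j \<longleftrightarrow> pre C1 j"
proof
  assume "pre (C1 \<union> C2) j"
  then obtain S where S: "S \<subseteq> C1 \<union> C2" "{1..2*j} = pts S" unfolding pre_def by blast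
  have "S \<inter> C2 = {}"
  proof (rule ccontr)
    assume "S \<inter> C2 \<noteq> {}"
    then obtain c where c: "c \<in> S" "c \<in> C2" by blast
    then have "fst c \<in> {2*k+1..2*n}" using m2 unfolding matching_def by blast
    moreover have "fst c \<in> pts S" using c in_pts by blast
    moreover have "fst c \<in> pts S" using c in_pts by blast
    then have "fst c \<le> 2*j" using S(2) by (metis atLeastAtMost_iff)
    ultimately show False using j by simp
  qed
  then have "S \<subseteq> C1" using S by blast
  then show "pre C1 j" using S unfolding pre_def by blast
next
  assume "pre C1 j"
  then show "pre (C1 \<union> C2) j" unfolding pre_def by blast
qed

lemma first_block:
  assumes n: "k \<le> n"
  shows "bij_betw (\<lambda>(C1,C2). C1 \<union> C2)
     ({C1. matching {1..2*k} C1 \<and> indecomposable k C1} \<times> {C2. matching {2*k+1..2*n} C2})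
     {C. matching {1..2*n} C \<and> first C k}"
proof -
  have split: "{1..2*k} \<union> {2*k+1..2*n} = {1..2*n::nat}" "{1..2*k} \<inter> {2*k+1..2*n} = ({}::nat set)"
    using n by auto
  show ?thesis
    unfolding bij_betw_def
  proof
    show "inj_on (\<lambda>(C1,C2). C1 \<union> C2)
      ({C1. matching {1..2*k} C1 \<and> indecomposable k C1} \<times> {C2. matching {2*k+1..2*n} C2})"
    proof (rule inj_onI, clarify)
      fix C1 C2 D1 D2
      assume h: "matching {1..2*k} C1" "matching {2*k+1..2*n} C2"
        "matching {1..2*k} D1" "matching {2*k+1..2*n} D2" "C1 \<union> C2 = D1 \<union> D2"
      have l: "X = {c \<in> X \<union> Y. snd c \<le> 2*k}" "Y = {c \<in> X \<union> Y. \<not> snd c \<le> 2*k}"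
        if "matching {1..2*k} X" "matching {2*k+1..2*n} Y" for X Y
        using that unfolding matching_def by auto
      show "C1 = D1 \<and> C2 = D2" using l[OF h(1,2)] l[OF h(3,4)] h(5) by metis
    qed
    show "(\<lambda>(C1,C2). C1 \<union> C2) `
      ({C1. matching {1..2*k} C1 \<and> indecomposable k C1} \<times> {C2. matching {2*k+1..2*n} C2})
      = {C. matching {1..2*n} C \<and> first C k}"
    proof
      show "(\<lambda>(C1,C2). C1 \<union> C2) `
        ({C1. matching {1..2*k} C1 \<and> indecomposable k C1} \<times> {C2. matching {2*k+1..2*n} C2})
        \<subseteq> {C. matching {1..2*n} C \<and> first C k}"
      proof clarify
        fix C1 C2 assume h: "matching {1..2*k} C1" "indecomposable k C1" "matching {2*k+1..2*n} C2"
        have m: "matching {1..2*n} (C1 \<union> C2)" using matching_union[OF h(1) h(3) split(2)] split(1) by simp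
        have k0: "0 < k" using h(2) unfolding indec_iff by blast
        have "pre C1 k" unfolding pre_def using matching_pts[OF h(1)] by blast
        then have "pre (C1 \<union> C2) k" using pre_union[OF h(1) h(3)] by blast
        moreover have "\<not> pre (C1 \<union> C2) j" if "0 < j" "j < k" for j
          using pre_union[OF h(1) h(3), of j] h(2) that unfolding indec_iff by auto
        ultimately show "matching {1..2*n} (C1 \<union> C2) \<and> first (C1 \<union> C2) k"
          using m k0 unfolding first_def by blast
      qed
      show "{C. matching {1..2*n} C \<and> first C k} \<subseteq> (\<lambda>(C1,C2). C1 \<union> C2) `
        ({C1. matching {1..2*k} C1 \<and> indecomposable k C1} \<times> {C2. matching {2*k+1..2*n} C2})"
      proof
        fix C assume "C \<in> {C. matching {1..2*n} C \<and> first C k}"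
        then have m: "matching {1..2*n} C" and f: "first C k" by auto
        obtain S where S: "S \<subseteq> C" "{1..2*k} = pts S" using f unfolding first_def pre_def by blast
        have m1: "matching {1..2*k} S" using matching_subset[OF m S(1)] S(2) by simp
        have m2: "matching {2*k+1..2*n} (C - S)"
          using matching_diff[OF m S(1)] S(2) n by (metis split(1) split(2) Diff_cancel Un_Diff Diff_triv sup_bot.left_neutral inf_commute)
        have CS: "C = S \<union> (C - S)" using S(1) by blast
        have "indecomposable k S"
          unfolding indec_iff
        proof
          show "0 < k" using f first_def by blast
          show "\<not> (\<exists>j. 0 < j \<and> j < k \<and> pre S j)"
          proof
            assume "\<exists>j. 0 < j \<and> j < k \<and> pre S j"
            then obtain j where j: "0 < j" "j < k" "pre S j" by blast
            then have "pre C j" using S(1) unfolding pre_def by blast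
            then show False using f j unfolding first_def by blast
          qed
        qed
        then show "C \<in> (\<lambda>(C1,C2). C1 \<union> C2) `
          ({C1. matching {1..2*k} C1 \<and> indecomposable k C1} \<times> {C2. matching {2*k+1..2*n} C2})"
          using m1 m2 CS by blast
      qed
    qed
  qed
qed

definition ii :: "nat \<Rightarrow> nat" where
  "ii k = card {C. chord_diagram k C \<and> indecomposable k C}"

lemma card_first:
  assumes "k \<le> n"
  shows "card {C. matching {1..2*n} C \<and> first C k} = ii k * dd (2*(n-k))"
proof -
  have "card {C. matching {1..2*n} C \<and> first C k} =
    card ({C1. matching {1..2*k} C1 \<and> indecomposable k C1} \<times> {C2. matching {2*k+1..2*n} C2})"
    using bij_betw_same_card[OF first_block[OF assms]] by simp
  also have "\<dots> = ii k * card {C2. matching {2*k+1..2*n} C2}"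
    unfolding ii_def cd_iff card_cartesian_product by simp
  also have "card {C2. matching {2*k+1..2*n} C2} = dd (2*(n-k))"
    using card_match_gen[of "{2*k+1..2*n}"] assms by (simp add: diff_mult_distrib2)
  finally show ?thesis .
qed

lemma dd_indec:
  assumes n: "0 < n"
  shows "dd (2*n) = (\<Sum>k=1..n. ii k * dd (2*(n-k)))"
proof -
  define A where "A k = {C. matching {1..2*n} C \<and> first C k}" for k
  have cover: "{C. matching {1..2*n} C} = (\<Union>k\<in>{1..n}. A k)"
  proof
    show "{C. matching {1..2*n} C} \<subseteq> (\<Union>k\<in>{1..n}. A k)"
    proof
      fix C assume "C \<in> {C. matching {1..2*n} C}"
      then have m: "matching {1..2*n} C" by simp
      have pn: "0 < n \<and> pre C n" using n matching_pts[OF m] unfolding pre_def by blast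
      define k where "k = (LEAST k. 0 < k \<and> pre C k)"
      have k: "0 < k \<and> pre C k" unfolding k_def by (rule LeastI[of _ n]) (rule pn)
      have kn: "k \<le> n" unfolding k_def by (rule Least_le) (rule pn)
      have "\<not> pre C j" if "0 < j" "j < k" for j
        using that not_less_Least[of j "\<lambda>k. 0 < k \<and> pre C k"] unfolding k_def by blast
      then have "first C k" using k unfolding first_def by blast
      then show "C \<in> (\<Union>k\<in>{1..n}. A k)" using k kn m unfolding A_def by force
    qed
    show "(\<Union>k\<in>{1..n}. A k) \<subseteq> {C. matching {1..2*n} C}" unfolding A_def by blast
  qed
  have disjA: "A k \<inter> A k' = {}" if "k \<noteq> k'" for k k'
  proof -
    have "\<not> (first C k \<and> first C k')" for C
    proof
      assume h: "first C k \<and> first C k'"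
      show False
      proof (cases "k < k'")
        case True then show False using h unfolding first_def by blast
      next
        case False then have "k' < k" using that by simp
        then show False using h unfolding first_def by blast
      qed
    qed
    then show ?thesis unfolding A_def by blast
  qed
  have finA: "finite (A k)" for k
    using finite_matchings[of "{1..2*n}"] unfolding A_def by (rule finite_subset[rotated]) auto
  have "dd (2*n) = card {C. matching {1..2*n} C}" using card_cd[of n] unfolding cd_iff by simp
  also have "\<dots> = (\<Sum>k\<in>{1..n}. card (A k))" unfolding cover
    using finA disjA by (intro card_UN_disjoint) auto
  also have "\<dots> = (\<Sum>k=1..n. ii k * dd (2*(n-k)))"
    unfolding A_def by (intro sum.cong refl card_first) simp
  finally show ?thesis .
qed


lemma matching_ex1: "matching P C \<Longrightarrow> k \<in> P \<Longrightarrow> \<exists>!c\<in>C. k = fst c \<or> k = snd c"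
  unfolding matching_def by blast

lemma matching_chord: "matching P C \<Longrightarrow> c \<in> C \<Longrightarrow> fst c < snd c \<and> fst c \<in> P \<and> snd c \<in> P"
  unfolding matching_def by blast

definition gapped :: "nat set \<Rightarrow> (nat \<times> nat) set \<Rightarrow> bool" where
  "gapped S H \<longleftrightarrow> (\<forall>c\<in>H. \<forall>s\<in>S. \<not> (fst c < s \<and> s < snd c))"

definition chord0 :: "nat set \<Rightarrow> (nat \<times> nat) set \<Rightarrow> nat \<times> nat" where
  "chord0 P G = (THE c. c \<in> G \<and> fst c = Min P)"

definition rootcls :: "nat set \<Rightarrow> (nat \<times> nat) set \<Rightarrow> (nat \<times> nat) set" where
  "rootcls P G = cls G (chord0 P G)"

lemma chord_at_min:
  assumes m: "matching P G" and fin: "finite P" and ne: "P \<noteq> {}"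
    and c: "c \<in> G" and k: "Min P = fst c \<or> Min P = snd c"
  shows "fst c = Min P"
proof -
  have h: "fst c < snd c" "fst c \<in> P" using matching_chord[OF m c] by auto
  have "Min P \<le> fst c" using fin h(2) by simp
  then show ?thesis using k h(1) by linarith
qed

lemma chord0_prop:
  assumes m: "matching P G" and fin: "finite P" and ne: "P \<noteq> {}"
  shows "chord0 P G \<in> G \<and> fst (chord0 P G) = Min P"
proof -
  have mP: "Min P \<in> P" using fin ne by simp
  have ex1: "\<exists>!e\<in>G. Min P = fst e \<or> Min P = snd e" by (rule matching_ex1[OF m mP])
  then obtain c where c: "c \<in> G" "Min P = fst c \<or> Min P = snd c" by blast
  have fc: "fst c = Min P" by (rule chord_at_min[OF m fin ne c])
  have uniq: "d = c" if "d \<in> G" "fst d = Min P" for d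
    using ex1 that c by metis
  have "(THE c. c \<in> G \<and> fst c = Min P) = c"
    by (rule the_equality) (use c(1) fc uniq in blast)+
  then show ?thesis unfolding chord0_def using c fc by simp
qed

lemma chord0_eq:
  assumes m: "matching P G" and fin: "finite P" and ne: "P \<noteq> {}"
    and c: "c \<in> G" "fst c = Min P"
  shows "chord0 P G = c"
proof -
  have mP: "Min P \<in> P" using fin ne by simp
  have h: "chord0 P G \<in> G \<and> fst (chord0 P G) = Min P" by (rule chord0_prop[OF m fin ne])
  have ex1: "\<exists>!e\<in>G. Min P = fst e \<or> Min P = snd e" by (rule matching_ex1[OF m mP])
  then show ?thesis using h c by metis
qed

lemma noncross_gapped:
  assumes R: "matching S R" and H: "gapped S H"
  shows "noncross R H"
  unfolding noncross_def
proof (intro ballI notI)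
  fix x y assume x: "x \<in> R" and y: "y \<in> H" and c: "crosses x y"
  have "fst x \<in> S" "snd x \<in> S" using matching_chord[OF R x] by auto
  then have h: "\<not> (fst y < fst x \<and> fst x < snd y)" "\<not> (fst y < snd x \<and> snd x < snd y)"
    using H y unfolding gapped_def by blast+
  obtain a b where ab: "x = (a,b)" by (cases x)
  obtain u v where uv: "y = (u,v)" by (cases y)
  show False using c h unfolding crosses_def ab uv by auto
qed

lemma noncross_mono: "noncross A B \<Longrightarrow> B' \<subseteq> B \<Longrightarrow> noncross A B'"
  unfolding noncross_def by blast

locale rootsetup =
  fixes P :: "nat set"
  assumes fin: "finite P" and ne: "P \<noteq> {}"
begin

lemma build:
  assumes S: "S \<subseteq> P" "Min P \<in> S" and R: "matching S R" "connected R"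
    and H: "matching (P - S) H" "gapped S H"
  shows "matching P (R \<union> H)" "rootcls P (R \<union> H) = R"
    "num_components (R \<union> H) = Suc (num_components H)"
proof -
  have u: "S \<union> (P - S) = P" "S \<inter> (P - S) = {}" using S by auto
  show m: "matching P (R \<union> H)" using matching_union[OF R(1) H(1) u(2)] u(1) by simp
  have nc: "noncross R H" by (rule noncross_gapped[OF R(1) H(2)])
  have finS: "finite S" using S fin finite_subset by blast
  have finR: "finite R" using matching_finite[OF finS R(1)] .
  have finH: "finite H" using matching_finite[OF _ H(1)] fin by blast
  have RH: "R \<inter> H = {}"
  proof (rule ccontr)
    assume "R \<inter> H \<noteq> {}"
    then obtain c where "c \<in> R" "c \<in> H" by blast
    then have "fst c \<in> S" "fst c \<in> P - S" using matching_chord[OF R(1), of c] matching_chord[OF H(1), of c] by blast+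
    then show False by simp
  qed
  obtain c where c: "c \<in> R" "Min P = fst c \<or> Min P = snd c" using matching_ex1[OF R(1) S(2)] by blast
  have fc: "fst c = Min P"
    using chord_at_min[OF m fin ne, of c] c by blast
  have c0: "chord0 P (R \<union> H) = c" using chord0_eq[OF m fin ne, of c] c(1) fc by simp
  have "noncross R ((R \<union> H) - R)" by (rule noncross_mono[OF nc]) blast
  then have "cls (R \<union> H) c = cls R c" using closed_cls[of R "R \<union> H" c, OF _ _ c(1)] by blast
  also have "\<dots> = R" using conn_cls[OF R(2) c(1)] .
  finally show "rootcls P (R \<union> H) = R" unfolding rootcls_def c0 .
  have "num_components R = 1" using conn_iff[OF finR] R(2) by simp
  then show "num_components (R \<union> H) = Suc (num_components H)"
    using comps_union[OF finR finH RH nc] by simp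
qed

lemma decomp:
  assumes m: "matching P G"
  defines "R \<equiv> rootcls P G"
  shows "pts R \<subseteq> P" "Min P \<in> pts R" "matching (pts R) R" "connected R"
    "matching (P - pts R) (G - R)" "gapped (pts R) (G - R)" "G = R \<union> (G - R)"
proof -
  obtain c0 where c0: "c0 = chord0 P G" by simp
  have c0p: "c0 \<in> G" "fst c0 = Min P" using chord0_prop[OF m fin ne] c0 by auto
  have RG: "R \<subseteq> G" unfolding R_def rootcls_def using cls_sub[OF c0p(1)] c0 by simp
  have Rc: "R = cls G c0" unfolding R_def rootcls_def c0 ..
  have closed: "noncross R (G - R)" unfolding Rc by (rule cls_closed[OF c0p(1)])
  show "pts R \<subseteq> P" using pts_mono[OF RG] matching_pts[OF m] by simp
  have c0R: "c0 \<in> R" unfolding Rc by (rule cls_self)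
  show "Min P \<in> pts R" using c0R c0p(2) in_pts by metis
  show "matching (pts R) R" by (rule matching_subset[OF m RG])
  show "matching (P - pts R) (G - R)" by (rule matching_diff[OF m RG])
  show "G = R \<union> (G - R)" using RG by blast
  show "connected R"
    unfolding connected_def
  proof (intro conjI allI impI)
    show "R \<noteq> {}" using c0R by blast
    fix X assume X: "X \<subseteq> R" "X \<noteq> {}" "noncross X (R - X)"
    have ncX: "noncross X (G - X)"
    proof -
      have "G - X = (R - X) \<union> (G - R)" using X(1) RG by blast
      moreover have "noncross X (G - R)" using closed X(1) unfolding noncross_def by blast
      ultimately show ?thesis using X(3) unfolding noncross_def by blast
    qed
    obtain x where x: "x \<in> X" using X(2) by blast
    have "(c0, x) \<in> (cross_rel G)\<^sup>*" using x X(1) unfolding Rc cls_def by blast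
    then have "(x, c0) \<in> (cross_rel G)\<^sup>*" by (rule rtrancl_cross_sym)
    then have c0X: "c0 \<in> X" using closed_reach[OF ncX x] by blast
    have "R \<subseteq> X"
    proof
      fix y assume "y \<in> R"
      then have "(c0, y) \<in> (cross_rel G)\<^sup>*" unfolding Rc cls_def by blast
      then show "y \<in> X" using closed_reach[OF ncX c0X] by blast
    qed
    then show "X = R" using X(1) by blast
  qed
  show "gapped (pts R) (G - R)"
    unfolding gapped_def
  proof (intro ballI notI)
    fix c s assume c: "c \<in> G - R" and s: "s \<in> pts R" and cs: "fst c < s \<and> s < snd c"
    obtain a b where ab: "c = (a,b)" by (cases c) auto
    have cG: "c \<in> G" and cR: "c \<notin> R" using c by auto
    have disjG: "ends y \<inter> ends c = {}" if "y \<in> G" "y \<noteq> c" for y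
      using m that cG unfolding matching_iff disj_def by blast
    have ordG: "fst y < snd y" if "y \<in> G" for y using m that unfolding matching_iff by blast
    have ncR: "\<not> crosses y c" if "y \<in> R" for y using closed that c unfolding noncross_def by blast
    obtain x where x: "x \<in> R" "s = fst x \<or> s = snd x" using s in_pts by blast
    have xin: "a < fst x \<and> snd x < b"
    proof -
      have "x \<in> G" using x RG by blast
      moreover have "x \<noteq> c" using x cR by blast
      ultimately have "ends x \<inter> ends c = {}" using disjG by blast
      then have ne: "fst x \<noteq> a" "fst x \<noteq> b" "snd x \<noteq> a" "snd x \<noteq> b" unfolding ends_def ab by auto
      have "fst x < snd x" using ordG \<open>x \<in> G\<close> by blast
      moreover have "\<not> crosses x c" using ncR x by blast
      ultimately show ?thesis using ne x(2) cs unfolding ab crosses_def by (cases x) auto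
    qed
    \<comment> \<open>invariant: nothing reachable from c0 lies inside\<close>
    have c0out: "\<not> (a < fst c0 \<and> snd c0 < b)"
    proof -
      have "a \<in> P" using matching_chord[OF m cG] unfolding ab by auto
      then have "Min P \<le> a" using fin by simp
      then show ?thesis using c0p by simp
    qed
    have inv: "y \<in> R \<and> \<not> (a < fst y \<and> snd y < b)" if "(c0, y) \<in> (cross_rel G)\<^sup>*" for y
      using that
    proof (induction rule: rtrancl_induct)
      case base then show ?case using c0R c0out by blast
    next
      case (step y z)
      have yR: "y \<in> R" using step by blast
      have zR: "z \<in> R" using step.hyps(1,2) unfolding Rc cls_def by (meson Image_singleton_iff rtrancl.rtrancl_into_rtrancl)
      have yz: "crosses y z" using step.hyps(2) by (simp add: cross_rel_iff)
      have yG: "y \<in> G" "z \<in> G" using yR zR RG by auto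
      have "y \<noteq> c" using yR cR by blast
      then have "ends y \<inter> ends c = {}" using disjG yG by blast
      then have ne: "fst y \<noteq> a" "snd y \<noteq> a" "fst y \<noteq> b" "snd y \<noteq> b" unfolding ends_def ab by auto
      have ncy: "\<not> crosses y c" using ncR yR by blast
      have oy: "fst y < snd y" "fst z < snd z" using ordG yG by auto
      have yout: "\<not> (a < fst y \<and> snd y < b)" using step by blast
      have "\<not> (a < fst z \<and> snd z < b)"
      proof
        assume zin: "a < fst z \<and> snd z < b"
        obtain p q where pq: "y = (p,q)" by (cases y) auto
        obtain u v where uv: "z = (u,v)" by (cases z) auto
        show False using zin yz ncy yout ne oy unfolding pq uv ab crosses_def by auto
      qed
      then show ?case using zR by blast
    qed
    have "(c0, x) \<in> (cross_rel G)\<^sup>*" using x(1) unfolding Rc cls_def by blast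
    then show False using inv xin by blast
  qed
qed


lemma count_root:
  "card {G. matching P G \<and> \<Phi> (num_components G)} =
   (\<Sum>S\<in>{S. S \<subseteq> P \<and> Min P \<in> S}. cc (card S) *
      card {H. matching (P - S) H \<and> gapped S H \<and> \<Phi> (Suc (num_components H))})"
proof -
  define Conn where "Conn S = {R. matching S R \<and> connected R}" for S
  define Gp where "Gp S = {H. matching (P - S) H \<and> gapped S H \<and> \<Phi> (Suc (num_components H))}" for S
  define B where "B S = (\<lambda>(R,H). R \<union> H) ` (Conn S \<times> Gp S)" for S
  define IS where "IS = {S. S \<subseteq> P \<and> Min P \<in> S}"
  have finIS: "finite IS" unfolding IS_def using fin by simp
  have finS: "finite S" if "S \<in> IS" for S using that fin finite_subset unfolding IS_def by blast
  have finConn: "finite (Conn S)" if "S \<in> IS" for S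
    unfolding Conn_def using finite_matchings[OF finS[OF that]] by (rule finite_subset[rotated]) blast
  have finGp: "finite (Gp S)" for S
    unfolding Gp_def using finite_matchings[of "P - S"] fin by (intro finite_subset[OF _ finite_matchings[of "P - S"]]) auto
  have cover: "{G. matching P G \<and> \<Phi> (num_components G)} = (\<Union>S\<in>IS. B S)"
  proof
    show "{G. matching P G \<and> \<Phi> (num_components G)} \<subseteq> (\<Union>S\<in>IS. B S)"
    proof
      fix G assume "G \<in> {G. matching P G \<and> \<Phi> (num_components G)}"
      then have m: "matching P G" and ph: "\<Phi> (num_components G)" by auto
      define R where "R = rootcls P G"
      note d = decomp[OF m, folded R_def]
      have eq: "num_components (R \<union> (G - R)) = Suc (num_components (G - R))"
        using build(3)[OF d(1,2,3,4,5,6)] .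
      have "R \<in> Conn (pts R)" unfolding Conn_def using d by blast
      moreover have "G - R \<in> Gp (pts R)" unfolding Gp_def using d ph eq by auto
      moreover have "pts R \<in> IS" unfolding IS_def using d by blast
      ultimately show "G \<in> (\<Union>S\<in>IS. B S)" unfolding B_def using d(7) by blast
    qed
    show "(\<Union>S\<in>IS. B S) \<subseteq> {G. matching P G \<and> \<Phi> (num_components G)}"
    proof
      fix G assume "G \<in> (\<Union>S\<in>IS. B S)"
      then obtain S R H where S: "S \<in> IS" and R: "R \<in> Conn S" and H: "H \<in> Gp S" and G: "G = R \<union> H"
        unfolding B_def by blast
      have h: "S \<subseteq> P" "Min P \<in> S" using S unfolding IS_def by auto
      have r: "matching S R" "connected R" using R unfolding Conn_def by auto
      have g: "matching (P - S) H" "gapped S H" "\<Phi> (Suc (num_components H))" using H unfolding Gp_def by auto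
      show "G \<in> {G. matching P G \<and> \<Phi> (num_components G)}"
        using build[OF h r g(1,2)] g(3) G by simp
    qed
  qed
  have disjB: "B S \<inter> B S' = {}" if "S \<in> IS" "S' \<in> IS" "S \<noteq> S'" for S S'
  proof (rule ccontr)
    have key: "pts (rootcls P G) = X" if kx: "X \<in> IS" "G \<in> B X" for X G
    proof -
      obtain R H where R: "R \<in> Conn X" and H: "H \<in> Gp X" and G: "G = R \<union> H"
        using kx(2) unfolding B_def by blast
      have h: "X \<subseteq> P" "Min P \<in> X" using kx(1) unfolding IS_def by auto
      have r: "matching X R" "connected R" using R unfolding Conn_def by auto
      have g: "matching (P - X) H" "gapped X H" using H unfolding Gp_def by auto
      have "rootcls P G = R" using build(2)[OF h r g] G by simp
      then show ?thesis using matching_pts[OF r(1)] by simp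
    qed
    assume "B S \<inter> B S' \<noteq> {}"
    then obtain G where "G \<in> B S" "G \<in> B S'" by blast
    then show False using key that by metis
  qed
  have cardB: "card (B S) = cc (card S) * card (Gp S)" if S: "S \<in> IS" for S
  proof -
    have inj: "inj_on (\<lambda>(R,H). R \<union> H) (Conn S \<times> Gp S)"
    proof (rule inj_onI, clarify)
      fix R H R' H' assume h: "R \<in> Conn S" "H \<in> Gp S" "R' \<in> Conn S" "H' \<in> Gp S" "R \<union> H = R' \<union> H'"
      have l: "X = {c \<in> X \<union> Y. fst c \<in> S}" "Y = {c \<in> X \<union> Y. fst c \<notin> S}"
        if "X \<in> Conn S" "Y \<in> Gp S" for X Y
      proof -
        have mx: "matching S X" using that(1) unfolding Conn_def by blast
        have my: "matching (P - S) Y" using that(2) unfolding Gp_def by blast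
        have "\<forall>c\<in>X. fst c \<in> S" using matching_chord[OF mx] by blast
        moreover have "\<forall>c\<in>Y. fst c \<notin> S" using matching_chord[OF my] by blast
        ultimately show "X = {c \<in> X \<union> Y. fst c \<in> S}" "Y = {c \<in> X \<union> Y. fst c \<notin> S}" by auto
      qed
      show "R = R' \<and> H = H'" using l[OF h(1,2)] l[OF h(3,4)] h(5) by metis
    qed
    have "card (B S) = card (Conn S \<times> Gp S)" unfolding B_def by (rule card_image[OF inj])
    also have "\<dots> = card (Conn S) * card (Gp S)" by (rule card_cartesian_product)
    also have "card (Conn S) = cc (card S)" unfolding Conn_def by (rule card_conn_gen[OF finS[OF S]])
    finally show ?thesis .
  qed
  have finB: "finite (B S)" if "S \<in> IS" for S
    unfolding B_def using finConn[OF that] finGp by blast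
  have "card {G. matching P G \<and> \<Phi> (num_components G)} = (\<Sum>S\<in>IS. card (B S))"
    unfolding cover using finIS finB disjB by (intro card_UN_disjoint) auto
  also have "\<dots> = (\<Sum>S\<in>IS. cc (card S) * card (Gp S))" using cardB by simp
  finally show ?thesis unfolding IS_def Gp_def .
qed

end


definition gpH :: "(nat \<Rightarrow> bool) \<Rightarrow> nat \<Rightarrow> nat \<Rightarrow> nat set \<Rightarrow> (nat \<times> nat) set set" where
  "gpH \<Phi> a b S = {H. matching ({a..<b} - S) H \<and> gapped S H \<and> \<Phi> (num_components H)}"

lemma gpH_base:
  "gpH \<Phi> a b {a} = {H. matching {Suc a..<b} H \<and> \<Phi> (num_components H)}"
proof -
  have e: "{a..<b} - {a} = {Suc a..<b}" by auto
  have "gapped {a} H" if "matching {Suc a..<b} H" for H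
    unfolding gapped_def using matching_chord[OF that] by fastforce
  then show ?thesis unfolding gpH_def e by blast
qed

lemma gap_split:
  assumes aa: "a < a'" and S': "S' \<subseteq> {a'..<b}" "a' \<in> S'"
  shows "bij_betw (\<lambda>(H1,H2). H1 \<union> H2)
    {(H1,H2). matching {Suc a..<a'} H1 \<and> matching ({a'..<b} - S') H2 \<and> gapped S' H2 \<and>
       \<Phi> (num_components H1 + num_components H2)}
    (gpH \<Phi> a b (insert a S'))"
proof -
  define I1 where "I1 = {Suc a..<a'}"
  define I2 where "I2 = {a'..<b} - S'"
  have U: "{a..<b} - insert a S' = I1 \<union> I2" "I1 \<inter> I2 = {}"
    unfolding I1_def I2_def using S' aa by auto
  have nc: "noncross H1 H2" if "matching I1 H1" "matching I2 H2" for H1 H2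
    unfolding noncross_def
  proof (intro ballI notI)
    fix x y assume x: "x \<in> H1" and y: "y \<in> H2" and c: "crosses x y"
    have "snd x < a'" using matching_chord[OF that(1) x] unfolding I1_def by auto
    moreover have "a' \<le> fst y" using matching_chord[OF that(2) y] unfolding I2_def by auto
    moreover have "fst x < snd x" "fst y < snd y" using matching_chord[OF that(1) x] matching_chord[OF that(2) y] by auto
    ultimately show False using c unfolding crosses_def by (cases x, cases y) auto
  qed
  have fin1: "finite H" if "matching I1 H" for H using matching_finite[OF _ that] unfolding I1_def by simp
  have fin2: "finite H" if "matching I2 H" for H using matching_finite[OF _ that] unfolding I2_def by simp
  show ?thesis
    unfolding bij_betw_def
  proof
    show "inj_on (\<lambda>(H1,H2). H1 \<union> H2) {(H1,H2). matching {Suc a..<a'} H1 \<and> matching ({a'..<b} - S') H2 \<and> gapped S' H2 \<and>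
       \<Phi> (num_components H1 + num_components H2)}"
    proof (rule inj_onI, clarify)
      fix X Y X' Y'
      assume h: "matching {Suc a..<a'} X" "matching ({a'..<b} - S') Y"
        "matching {Suc a..<a'} X'" "matching ({a'..<b} - S') Y'" "X \<union> Y = X' \<union> Y'"
      have l: "A = {c \<in> A \<union> B. fst c < a'}" "B = {c \<in> A \<union> B. \<not> fst c < a'}"
        if "matching {Suc a..<a'} A" "matching ({a'..<b} - S') B" for A B
      proof -
        have "\<forall>c\<in>A. fst c < a'" using matching_chord[OF that(1)] by auto
        moreover have "\<forall>c\<in>B. \<not> fst c < a'"
        proof
          fix c assume "c \<in> B"
          then have "fst c \<in> {a'..<b} - S'" using matching_chord[OF that(2)] by blast
          then show "\<not> fst c < a'" by simp
        qed
        ultimately show "A = {c \<in> A \<union> B. fst c < a'}" "B = {c \<in> A \<union> B. \<not> fst c < a'}" by auto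
      qed
      show "X = X' \<and> Y = Y'" using l[OF h(1,2)] l[OF h(3,4)] h(5) by metis
    qed
    show "(\<lambda>(H1,H2). H1 \<union> H2) ` {(H1,H2). matching {Suc a..<a'} H1 \<and> matching ({a'..<b} - S') H2 \<and> gapped S' H2 \<and>
       \<Phi> (num_components H1 + num_components H2)} = gpH \<Phi> a b (insert a S')"
    proof
      show "(\<lambda>(H1,H2). H1 \<union> H2) ` {(H1,H2). matching {Suc a..<a'} H1 \<and> matching ({a'..<b} - S') H2 \<and> gapped S' H2 \<and>
       \<Phi> (num_components H1 + num_components H2)} \<subseteq> gpH \<Phi> a b (insert a S')"
      proof clarify
        fix H1 H2 assume h: "matching {Suc a..<a'} H1" "matching ({a'..<b} - S') H2" "gapped S' H2"
          "\<Phi> (num_components H1 + num_components H2)"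
        have h1: "matching I1 H1" "matching I2 H2" using h unfolding I1_def I2_def by auto
        have m: "matching ({a..<b} - insert a S') (H1 \<union> H2)"
          using matching_union[OF h1 U(2)] U(1) by simp
        have dis: "H1 \<inter> H2 = {}"
        proof (rule ccontr)
          assume "H1 \<inter> H2 \<noteq> {}"
          then obtain c where "c \<in> H1" "c \<in> H2" by blast
          then show False using matching_chord[OF h1(1)] matching_chord[OF h1(2)] U(2) by blast
        qed
        have nm: "num_components (H1 \<union> H2) = num_components H1 + num_components H2"
          by (rule comps_union[OF fin1[OF h1(1)] fin2[OF h1(2)] dis nc[OF h1]])
        have g: "gapped (insert a S') (H1 \<union> H2)"
          unfolding gapped_def
        proof (intro ballI notI)
          fix c s assume c: "c \<in> H1 \<union> H2" and s: "s \<in> insert a S'" and cs: "fst c < s \<and> s < snd c"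
          show False
          proof (cases "c \<in> H1")
            case True
            then have "Suc a \<le> fst c" "snd c < a'" using matching_chord[OF h(1) True] by auto
            moreover have "s = a \<or> a' \<le> s" using s S' by auto
            ultimately show False using cs by auto
          next
            case False
            then have c2: "c \<in> H2" using c by blast
            then have "a' \<le> fst c" using matching_chord[OF h(2) c2] by auto
            then have "s \<noteq> a" using cs aa by auto
            then have "s \<in> S'" using s by blast
            then show False using h(3) c2 cs unfolding gapped_def by blast
          qed
        qed
        show "H1 \<union> H2 \<in> gpH \<Phi> a b (insert a S')" unfolding gpH_def using m g nm h(4) by simp
      qed
      show "gpH \<Phi> a b (insert a S') \<subseteq> (\<lambda>(H1,H2). H1 \<union> H2) ` {(H1,H2). matching {Suc a..<a'} H1 \<and> matching ({a'..<b} - S') H2 \<and> gapped S' H2 \<and>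
       \<Phi> (num_components H1 + num_components H2)}"
      proof
        fix H assume "H \<in> gpH \<Phi> a b (insert a S')"
        then have m: "matching (I1 \<union> I2) H" and g: "gapped (insert a S') H" and ph: "\<Phi> (num_components H)"
          unfolding gpH_def U(1) by auto
        define H1 where "H1 = {c \<in> H. fst c < a'}"
        define H2 where "H2 = {c \<in> H. \<not> fst c < a'}"
        have HH: "H = H1 \<union> H2" unfolding H1_def H2_def by blast
        have p1: "pts H1 \<subseteq> I1"
        proof
          fix p assume "p \<in> pts H1"
          then have "\<exists>c\<in>H1. p = fst c \<or> p = snd c" by (simp add: in_pts)
          then obtain c where c0: "c \<in> H1" "p = fst c \<or> p = snd c" by blast
          then have c: "c \<in> H" "fst c < a'" "p = fst c \<or> p = snd c" unfolding H1_def by auto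
          have ch: "fst c < snd c" "fst c \<in> I1 \<union> I2" "snd c \<in> I1 \<union> I2" using matching_chord[OF m c(1)] by auto
          have "\<not> (fst c < a' \<and> a' < snd c)" using g c(1) S'(2) unfolding gapped_def by blast
          moreover have "snd c \<noteq> a'"
          proof
            assume "snd c = a'"
            then have "a' \<in> I1 \<union> I2" using ch(3) by simp
            then show False using S'(2) unfolding I1_def I2_def by simp
          qed
          ultimately have "snd c < a'" using c(2) ch(1) by linarith
          then have "snd c \<in> I1" using ch(3) unfolding I1_def I2_def by simp
          moreover have "fst c \<in> I1" using ch(2) c(2) unfolding I1_def I2_def by simp
          ultimately show "p \<in> I1" using c(3) by blast
        qed
        have p2: "pts H2 \<subseteq> I2"
        proof
          fix p assume "p \<in> pts H2"
          then have "\<exists>c\<in>H2. p = fst c \<or> p = snd c" by (simp add: in_pts)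
          then obtain c where c0: "c \<in> H2" "p = fst c \<or> p = snd c" by blast
          then have c: "c \<in> H" "\<not> fst c < a'" "p = fst c \<or> p = snd c" unfolding H2_def by auto
          have ch: "fst c < snd c" "fst c \<in> I1 \<union> I2" "snd c \<in> I1 \<union> I2" using matching_chord[OF m c(1)] by auto
          have "fst c \<in> I2" using ch(2) c(2) unfolding I1_def I2_def by simp
          moreover have "snd c \<in> I2" using ch(1,3) c(2) unfolding I1_def I2_def by simp
          ultimately show "p \<in> I2" using c(3) by blast
        qed
        have ptsH: "pts H1 \<union> pts H2 = I1 \<union> I2" using matching_pts[OF m] HH by simp
        have e1: "pts H1 = I1" using p1 p2 ptsH U(2) by blast
        have e2: "pts H2 = I2" using p1 p2 ptsH U(2) by blast
        have m1: "matching I1 H1" using matching_subset[OF m, of H1] e1 unfolding H1_def by simp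
        have m2: "matching I2 H2" using matching_subset[OF m, of H2] e2 unfolding H2_def by simp
        have g2: "gapped S' H2" using g unfolding gapped_def H2_def by blast
        have dis: "H1 \<inter> H2 = {}" unfolding H1_def H2_def by blast
        have nm: "num_components H = num_components H1 + num_components H2"
          unfolding HH by (rule comps_union[OF fin1[OF m1] fin2[OF m2] dis nc[OF m1 m2]])
        show "H \<in> (\<lambda>(H1,H2). H1 \<union> H2) ` {(H1,H2). matching {Suc a..<a'} H1 \<and> matching ({a'..<b} - S') H2 \<and> gapped S' H2 \<and>
          \<Phi> (num_components H1 + num_components H2)}"
        proof (rule image_eqI[of _ _ "(H1,H2)"])
          show "H = (\<lambda>(H1,H2). H1 \<union> H2) (H1,H2)" using HH by simp
          show "(H1,H2) \<in> {(H1,H2). matching {Suc a..<a'} H1 \<and> matching ({a'..<b} - S') H2 \<and> gapped S' H2 \<and>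
            \<Phi> (num_components H1 + num_components H2)}"
            using m1 m2 g2 ph nm unfolding I1_def I2_def by simp
        qed
      qed
    qed
  qed
qed


definition SS :: "nat \<Rightarrow> nat \<Rightarrow> nat \<Rightarrow> nat set set" where
  "SS a b j = {S. S \<subseteq> {a..<b} \<and> a \<in> S \<and> card S = j}"

lemma SS_finite: "finite (SS a b j)"
  unfolding SS_def by (rule finite_subset[of _ "Pow {a..<b}"]) auto

lemma SS_1: "a < b \<Longrightarrow> SS a b 1 = {{a}}"
  unfolding SS_def by (auto simp: card_1_singleton_iff)

lemma SS_empty: "b - a < j \<Longrightarrow> SS a b j = {}"
proof -
  assume j: "b - a < j"
  have "card S \<le> b - a" if "S \<subseteq> {a..<b}" for S
    using card_mono[OF _ that] by simp
  then have "\<not> (S \<subseteq> {a..<b} \<and> a \<in> S \<and> card S = j)" for S using j by (metis leD)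
  then show ?thesis unfolding SS_def by blast
qed

lemma SS_split:
  assumes j: "1 \<le> j"
  shows "SS a b (Suc j) = (\<Union>a'\<in>{Suc a..<b}. insert a ` SS a' b j)"
proof
  show "SS a b (Suc j) \<subseteq> (\<Union>a'\<in>{Suc a..<b}. insert a ` SS a' b j)"
  proof
    fix S assume "S \<in> SS a b (Suc j)"
    then have S: "S \<subseteq> {a..<b}" "a \<in> S" "card S = Suc j" unfolding SS_def by auto
    define S' where "S' = S - {a}"
    have fS: "finite S" using S(1) finite_subset by blast
    have cS': "card S' = j" unfolding S'_def using S fS by simp
    then have neS': "S' \<noteq> {}" using j by auto
    have fS': "finite S'" using fS unfolding S'_def by simp
    define a' where "a' = Min S'"
    have a'S': "a' \<in> S'" unfolding a'_def using fS' neS' by simp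
    have a'r: "a' \<in> {Suc a..<b}" using a'S' S unfolding S'_def by auto
    have "S' \<subseteq> {a'..<b}"
    proof
      fix x assume x: "x \<in> S'"
      then have "a' \<le> x" unfolding a'_def using fS' by simp
      moreover have "x < b" using x S(1) unfolding S'_def by auto
      ultimately show "x \<in> {a'..<b}" by simp
    qed
    then have "S' \<in> SS a' b j" unfolding SS_def using a'S' cS' by blast
    moreover have "S = insert a S'" unfolding S'_def using S(2) by blast
    ultimately show "S \<in> (\<Union>a'\<in>{Suc a..<b}. insert a ` SS a' b j)" using a'r by blast
  qed
  show "(\<Union>a'\<in>{Suc a..<b}. insert a ` SS a' b j) \<subseteq> SS a b (Suc j)"
  proof
    fix S assume "S \<in> (\<Union>a'\<in>{Suc a..<b}. insert a ` SS a' b j)"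
    then obtain a' S' where a': "a' \<in> {Suc a..<b}" and S': "S' \<in> SS a' b j" and SS': "S = insert a S'" by blast
    have h: "S' \<subseteq> {a'..<b}" "a' \<in> S'" "card S' = j" using S' unfolding SS_def by auto
    have "a \<notin> S'" using h a' by auto
    moreover have "finite S'" using h(1) finite_subset by blast
    ultimately have "card S = Suc j" using h SS' by simp
    moreover have "S \<subseteq> {a..<b}" using h(1) a' SS' by auto
    ultimately show "S \<in> SS a b (Suc j)" unfolding SS_def using SS' by blast
  qed
qed

lemma Min_SS: "S \<in> SS a b j \<Longrightarrow> Min S = a"
proof -
  assume "S \<in> SS a b j"
  then have h: "S \<subseteq> {a..<b}" "a \<in> S" unfolding SS_def by auto
  then have "finite S" using finite_subset by blast
  then show "Min S = a" using h by (intro Min_eqI) auto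
qed

lemma sum_SS_split:
  assumes j: "1 \<le> j"
  shows "(\<Sum>S\<in>SS a b (Suc j). g S) = (\<Sum>a'\<in>{Suc a..<b}. \<Sum>S'\<in>SS a' b j. g (insert a S'))"
proof -
  have disj: "insert a ` SS a' b j \<inter> insert a ` SS a'' b j = {}"
    if "a' \<in> {Suc a..<b}" "a'' \<in> {Suc a..<b}" "a' \<noteq> a''" for a' a''
  proof (rule ccontr)
    assume "insert a ` SS a' b j \<inter> insert a ` SS a'' b j \<noteq> {}"
    then obtain S1 S2 where s: "S1 \<in> SS a' b j" "S2 \<in> SS a'' b j" "insert a S1 = insert a S2" by blast
    have "a \<notin> S1" "a \<notin> S2" using s that unfolding SS_def by auto
    then have "S1 = S2" using s(3) by (metis insert_ident)
    moreover have "Min S1 = a'" "Min S2 = a''" using Min_SS s(1,2) by auto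
    ultimately show False using that by simp
  qed
  have inj: "inj_on (insert a) (SS a' b j)" if "a' \<in> {Suc a..<b}" for a'
  proof (rule inj_onI)
    fix S1 S2 assume s: "S1 \<in> SS a' b j" "S2 \<in> SS a' b j" "insert a S1 = insert a S2"
    have "a \<notin> S1" "a \<notin> S2" using s that unfolding SS_def by auto
    then show "S1 = S2" using s(3) by (metis insert_ident)
  qed
  have "(\<Sum>S\<in>SS a b (Suc j). g S) = (\<Sum>a'\<in>{Suc a..<b}. \<Sum>S\<in>insert a ` SS a' b j. g S)"
    unfolding SS_split[OF j] by (rule sum.UNION_disjoint) (auto simp: SS_finite disj)
  also have "\<dots> = (\<Sum>a'\<in>{Suc a..<b}. \<Sum>S'\<in>SS a' b j. g (insert a S'))"
    by (rule sum.cong[OF refl]) (simp add: sum.reindex[OF inj])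
  finally show ?thesis .
qed


lemma finite_match_H: "matching X H \<Longrightarrow> X \<subseteq> {..<n} \<Longrightarrow> finite H"
  using matching_finite[of X H] finite_subset[of X "{..<n}"] by blast

lemma le1_split:
  assumes "finite X"
  shows "{H. matching X H \<and> Q H \<and> num_components H \<le> 1} =
         {H. matching X H \<and> Q H \<and> H = {}} \<union> {H. matching X H \<and> Q H \<and> connected H}"
proof -
  have "num_components H \<le> 1 \<longleftrightarrow> H = {} \<or> connected H" if "matching X H" for H
  proof -
    have fH: "finite H" using matching_finite[OF assms that] .
    have "num_components H \<le> 1 \<longleftrightarrow> num_components H = 0 \<or> num_components H = 1" by auto
    then show ?thesis using comps_zero_iff[OF fH] conn_iff[OF fH] by simp
  qed
  then show ?thesis by blast
qed

lemma card_empty_match: "card {H. matching X H \<and> Q H \<and> H = {}} = (if X = {} \<and> Q {} then 1 else 0)"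
proof -
  have "{H. matching X H \<and> Q H \<and> H = {}} = (if X = {} \<and> Q {} then {{}} else {})"
    using matching_empty_iff by auto
  then show ?thesis by simp
qed

lemma card_le1:
  assumes "finite X"
  shows "card {H. matching X H \<and> num_components H \<le> 1} = (if X = {} then 1 else 0) + cc (card X)"
proof -
  have "{H. matching X H \<and> num_components H \<le> 1} =
         {H. matching X H \<and> True \<and> H = {}} \<union> {H. matching X H \<and> True \<and> connected H}"
    using le1_split[OF assms, of "\<lambda>_. True"] by simp
  moreover have "{H. matching X H \<and> True \<and> H = {}} \<inter> {H. matching X H \<and> True \<and> connected H} = {}"
    unfolding connected_def by blast
  moreover have "finite {H. matching X H \<and> True \<and> H = {}}" "finite {H. matching X H \<and> True \<and> connected H}"
    using finite_matchings[OF assms] by (auto intro: finite_subset[rotated])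
  ultimately have "card {H. matching X H \<and> num_components H \<le> 1} =
     card {H. matching X H \<and> True \<and> H = {}} + card {H. matching X H \<and> True \<and> connected H}"
    by (simp add: card_Un_disjoint)
  also have "\<dots> = (if X = {} then 1 else 0) + cc (card X)"
    using card_empty_match[of X "\<lambda>_. True"] card_conn_gen[OF assms] by simp
  finally show ?thesis .
qed

lemma gp_base0: "card (gpH (\<lambda>_. True) a b {a}) = dd (b - Suc a)"
  unfolding gpH_base using card_match_gen[of "{Suc a..<b}"] by simp

lemma gp_base1: "a < b \<Longrightarrow> card (gpH (\<lambda>k. k \<le> 1) a b {a}) = (if b = Suc a then 1 else 0) + cc (b - Suc a)"
  unfolding gpH_base using card_le1[of "{Suc a..<b}"] by simp

lemma gp_step0:
  assumes aa: "a < a'" and S': "S' \<subseteq> {a'..<b}" "a' \<in> S'"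
  shows "card (gpH (\<lambda>_. True) a b (insert a S')) = dd (a' - Suc a) * card (gpH (\<lambda>_. True) a' b S')"
proof -
  have "card (gpH (\<lambda>_. True) a b (insert a S')) =
    card {(H1,H2). matching {Suc a..<a'} H1 \<and> matching ({a'..<b} - S') H2 \<and> gapped S' H2 \<and>
       (\<lambda>_. True) (num_components H1 + num_components H2)}"
    using bij_betw_same_card[OF gap_split[OF aa S', of "\<lambda>_. True"]] by simp
  also have "{(H1,H2). matching {Suc a..<a'} H1 \<and> matching ({a'..<b} - S') H2 \<and> gapped S' H2 \<and>
       (\<lambda>_. True) (num_components H1 + num_components H2)} =
     {H1. matching {Suc a..<a'} H1} \<times> gpH (\<lambda>_. True) a' b S'"
    unfolding gpH_def by auto
  also have "card \<dots> = dd (a' - Suc a) * card (gpH (\<lambda>_. True) a' b S')"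
    unfolding card_cartesian_product using card_match_gen[of "{Suc a..<a'}"] by simp
  finally show ?thesis .
qed

lemma gp_step1:
  assumes aa: "a < a'" and S': "S' \<subseteq> {a'..<b}" "a' \<in> S'"
  shows "card (gpH (\<lambda>k. k \<le> 1) a b (insert a S')) =
     (if a' = Suc a then card (gpH (\<lambda>k. k \<le> 1) a' b S') else 0) +
     cc (a' - Suc a) * (if S' = {a'..<b} then 1 else 0)"
proof -
  define E1 where "E1 = {H1. matching {Suc a..<a'} H1 \<and> True \<and> H1 = {}}"
  define C1 where "C1 = {H1. matching {Suc a..<a'} H1 \<and> True \<and> connected H1}"
  define E2 where "E2 = {H2. matching ({a'..<b} - S') H2 \<and> gapped S' H2 \<and> H2 = {}}"
  define G1 where "G1 = gpH (\<lambda>k. k \<le> 1) a' b S'"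
  have "card (gpH (\<lambda>k. k \<le> 1) a b (insert a S')) =
    card {(H1,H2). matching {Suc a..<a'} H1 \<and> matching ({a'..<b} - S') H2 \<and> gapped S' H2 \<and>
       (\<lambda>k. k \<le> 1) (num_components H1 + num_components H2)}"
    using bij_betw_same_card[OF gap_split[OF aa S', of "\<lambda>k. k \<le> 1"]] by simp
  also have "{(H1,H2). matching {Suc a..<a'} H1 \<and> matching ({a'..<b} - S') H2 \<and> gapped S' H2 \<and>
       (\<lambda>k. k \<le> 1) (num_components H1 + num_components H2)} = (E1 \<times> G1) \<union> (C1 \<times> E2)"
  proof -
    have fin1: "finite H" if "matching {Suc a..<a'} H" for H using matching_finite[OF _ that] by simp
    have fin2: "finite H" if "matching ({a'..<b} - S') H" for H using matching_finite[OF _ that] by simp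
    have "(num_components H1 + num_components H2 \<le> 1) \<longleftrightarrow>
        (H1 = {} \<and> num_components H2 \<le> 1) \<or> (connected H1 \<and> H2 = {})"
      if "matching {Suc a..<a'} H1" "matching ({a'..<b} - S') H2" for H1 H2
    proof -
      have f: "finite H1" "finite H2" using fin1 fin2 that by auto
      have "num_components H1 + num_components H2 \<le> 1 \<longleftrightarrow>
         (num_components H1 = 0 \<and> num_components H2 \<le> 1) \<or> (num_components H1 = 1 \<and> num_components H2 = 0)"
        by auto
      then show ?thesis using comps_zero_iff[OF f(1)] comps_zero_iff[OF f(2)] conn_iff[OF f(1)] by simp
    qed
    then show ?thesis unfolding E1_def C1_def E2_def G1_def gpH_def by auto
  qed
  also have "card ((E1 \<times> G1) \<union> (C1 \<times> E2)) = card (E1 \<times> G1) + card (C1 \<times> E2)"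
  proof (rule card_Un_disjoint)
    have fE1: "finite E1" "finite C1" unfolding E1_def C1_def
      using finite_matchings[of "{Suc a..<a'}"] by (auto intro: finite_subset[rotated])
    have fG: "finite G1" "finite E2" unfolding G1_def E2_def gpH_def
      using finite_matchings[of "{a'..<b} - S'"] by (auto intro: finite_subset[rotated])
    show "finite (E1 \<times> G1)" "finite (C1 \<times> E2)" using fE1 fG by auto
    show "E1 \<times> G1 \<inter> C1 \<times> E2 = {}" unfolding E1_def C1_def connected_def by blast
  qed
  also have "card (E1 \<times> G1) = (if a' = Suc a then card G1 else 0)"
  proof -
    have "card E1 = (if a' = Suc a then 1 else 0)" unfolding E1_def card_empty_match using aa by auto
    then show ?thesis unfolding card_cartesian_product by simp
  qed
  also have "card (C1 \<times> E2) = cc (a' - Suc a) * (if S' = {a'..<b} then 1 else 0)"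
  proof -
    have "card C1 = cc (a' - Suc a)" unfolding C1_def using card_conn_gen[of "{Suc a..<a'}"] by simp
    moreover have "card E2 = (if S' = {a'..<b} then 1 else 0)"
    proof -
      have "E2 = {H2. matching ({a'..<b} - S') H2 \<and> gapped S' H2 \<and> H2 = {}}" by (simp add: E2_def)
      then have "card E2 = (if {a'..<b} - S' = {} \<and> gapped S' {} then 1 else 0)" using card_empty_match by simp
      moreover have "gapped S' {}" unfolding gapped_def by simp
      moreover have "{a'..<b} - S' = {} \<longleftrightarrow> S' = {a'..<b}" using S' by auto
      ultimately show ?thesis by simp
    qed
    ultimately show ?thesis unfolding card_cartesian_product by simp
  qed
  finally show ?thesis unfolding G1_def .
qed


definition W0 :: "nat \<Rightarrow> nat \<Rightarrow> nat \<Rightarrow> nat" where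
  "W0 a b j = (\<Sum>S\<in>SS a b j. card (gpH (\<lambda>_. True) a b S))"
definition W1 :: "nat \<Rightarrow> nat \<Rightarrow> nat \<Rightarrow> nat" where
  "W1 a b j = (\<Sum>S\<in>SS a b j. card (gpH (\<lambda>k. k \<le> 1) a b S))"

lemma SS_mem: "S' \<in> SS a' b j \<Longrightarrow> S' \<subseteq> {a'..<b} \<and> a' \<in> S'"
  unfolding SS_def by auto

lemma W0_step:
  assumes j: "1 \<le> j"
  shows "W0 a b (Suc j) = (\<Sum>a'\<in>{Suc a..<b}. dd (a' - Suc a) * W0 a' b j)"
proof -
  have "W0 a b (Suc j) = (\<Sum>a'\<in>{Suc a..<b}. \<Sum>S'\<in>SS a' b j. card (gpH (\<lambda>_. True) a b (insert a S')))"
    unfolding W0_def by (rule sum_SS_split[OF j])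
  also have "\<dots> = (\<Sum>a'\<in>{Suc a..<b}. \<Sum>S'\<in>SS a' b j. dd (a' - Suc a) * card (gpH (\<lambda>_. True) a' b S'))"
  proof (intro sum.cong refl)
    fix a' S' assume a': "a' \<in> {Suc a..<b}" and S': "S' \<in> SS a' b j"
    show "card (gpH (\<lambda>_. True) a b (insert a S')) = dd (a' - Suc a) * card (gpH (\<lambda>_. True) a' b S')"
      using gp_step0[of a a' S' b] a' SS_mem[OF S'] by auto
  qed
  also have "\<dots> = (\<Sum>a'\<in>{Suc a..<b}. dd (a' - Suc a) * W0 a' b j)"
    unfolding W0_def by (simp add: sum_distrib_left)
  finally show ?thesis .
qed

lemma W1_zero: "1 \<le> j \<Longrightarrow> b - a < j \<Longrightarrow> W1 a b j = 0"
  unfolding W1_def using SS_empty by simp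

lemma W1_step:
  assumes j: "1 \<le> j"
  shows "W1 a b (Suc j) = W1 (Suc a) b j + (if Suc a + j \<le> b then cc (b - j - Suc a) else 0)"
proof -
  have "W1 a b (Suc j) = (\<Sum>a'\<in>{Suc a..<b}. \<Sum>S'\<in>SS a' b j. card (gpH (\<lambda>k. k \<le> 1) a b (insert a S')))"
    unfolding W1_def by (rule sum_SS_split[OF j])
  also have "\<dots> = (\<Sum>a'\<in>{Suc a..<b}. \<Sum>S'\<in>SS a' b j.
       (if a' = Suc a then card (gpH (\<lambda>k. k \<le> 1) a' b S') else 0) +
       cc (a' - Suc a) * (if S' = {a'..<b} then 1 else 0))"
  proof (intro sum.cong refl)
    fix a' S' assume a': "a' \<in> {Suc a..<b}" and S': "S' \<in> SS a' b j"
    show "card (gpH (\<lambda>k. k \<le> 1) a b (insert a S')) = (if a' = Suc a then card (gpH (\<lambda>k. k \<le> 1) a' b S') else 0) +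
       cc (a' - Suc a) * (if S' = {a'..<b} then 1 else 0)"
      using gp_step1[of a a' S' b] a' SS_mem[OF S'] by auto
  qed
  also have "\<dots> = (\<Sum>a'\<in>{Suc a..<b}. (if a' = Suc a then W1 a' b j else 0)) +
      (\<Sum>a'\<in>{Suc a..<b}. cc (a' - Suc a) * (\<Sum>S'\<in>SS a' b j. (if S' = {a'..<b} then 1 else 0)))"
  proof -
    have e: "(\<Sum>S'\<in>SS a' b j. (if a' = Suc a then card (gpH (\<lambda>k. k \<le> 1) a' b S') else 0)) =
       (if a' = Suc a then W1 a' b j else 0)" for a' unfolding W1_def by simp
    show ?thesis by (simp add: sum.distrib sum_distrib_left e)
  qed
  also have "(\<Sum>a'\<in>{Suc a..<b}. (if a' = Suc a then W1 a' b j else 0)) = W1 (Suc a) b j"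
  proof (cases "Suc a < b")
    case True then show ?thesis by (simp add: sum.delta)
  next
    case False
    then have "b - Suc a < j" using j by simp
    then have "W1 (Suc a) b j = 0" by (rule W1_zero[OF j])
    then show ?thesis using False by simp
  qed
  also have "(\<Sum>a'\<in>{Suc a..<b}. cc (a' - Suc a) * (\<Sum>S'\<in>SS a' b j. (if S' = {a'..<b} then 1 else 0))) =
      (\<Sum>a'\<in>{Suc a..<b}. if a' = b - j then cc (a' - Suc a) else 0)"
  proof (intro sum.cong refl)
    fix a' assume a': "a' \<in> {Suc a..<b}"
    have "(\<Sum>S'\<in>SS a' b j. (if S' = {a'..<b} then 1 else 0)) = (if {a'..<b} \<in> SS a' b j then 1 else (0::nat))"
      using SS_finite by (simp add: sum.delta)
    also have "({a'..<b} \<in> SS a' b j) \<longleftrightarrow> a' = b - j" using a' j unfolding SS_def by auto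
    finally show "cc (a' - Suc a) * (\<Sum>S'\<in>SS a' b j. (if S' = {a'..<b} then 1 else 0)) =
       (if a' = b - j then cc (a' - Suc a) else 0)" by simp
  qed
  also have "\<dots> = (if Suc a + j \<le> b then cc (b - j - Suc a) else 0)"
    using j by (simp add: sum.delta', arith)
  finally show ?thesis .
qed

lemma W1_formula:
  assumes j: "1 \<le> j" shows "j \<le> b - a \<Longrightarrow> W1 a b j = (if j = b - a then 1 else 0) + j * cc (b - a - j)"
  using j
proof (induction j arbitrary: a rule: nat_induct_at_least)
  case base
  then have ab: "a < b" by simp
  have "W1 a b 1 = card (gpH (\<lambda>k. k \<le> 1) a b {a})" unfolding W1_def SS_1[OF ab] by simp
  also have "\<dots> = (if b = Suc a then 1 else 0) + cc (b - Suc a)" by (rule gp_base1[OF ab])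
  finally show ?case using ab by auto
next
  case (Suc j)
  have ih: "W1 (Suc a) b j = (if j = b - Suc a then 1 else 0) + j * cc (b - Suc a - j)"
    using Suc.IH Suc.prems by simp
  have "W1 a b (Suc j) = W1 (Suc a) b j + cc (b - j - Suc a)"
    using W1_step[OF Suc.hyps] Suc.prems by simp
  then show ?case using ih Suc.prems by (auto simp: algebra_simps)
qed


definition Dl :: "rat fps" where "Dl = Abs_fps (\<lambda>n. of_nat (dd n))"

lemma W0_zero: "1 \<le> j \<Longrightarrow> b - a < j \<Longrightarrow> W0 a b j = 0"
  unfolding W0_def using SS_empty by simp

lemma W0_formula:
  assumes j: "1 \<le> j" shows "j \<le> b - a \<Longrightarrow> (of_nat (W0 a b j) :: rat) = fps_nth (Dl^j) (b - a - j)"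
  using j
proof (induction j arbitrary: a rule: nat_induct_at_least)
  case base
  then have ab: "a < b" by simp
  have "W0 a b 1 = card (gpH (\<lambda>_. True) a b {a})" unfolding W0_def SS_1[OF ab] by simp
  also have "\<dots> = dd (b - Suc a)" by (rule gp_base0)
  finally show ?case by (simp add: Dl_def)
next
  case (Suc j)
  define N where "N = b - a - Suc j"
  have bj: "N + Suc a = b - j" unfolding N_def using Suc.prems by simp
  define f where "f a' = (of_nat (dd (a' - Suc a)) :: rat) * of_nat (W0 a' b j)" for a'
  have "(of_nat (W0 a b (Suc j)) :: rat) = (\<Sum>a'\<in>{Suc a..<b}. f a')"
    unfolding W0_step[OF Suc.hyps] f_def by simp
  also have "\<dots> = (\<Sum>a'\<in>{Suc a..b - j}. f a')"
  proof (rule sum.mono_neutral_right)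
    show "finite {Suc a..<b}" by simp
    show "{Suc a..b - j} \<subseteq> {Suc a..<b}" using Suc.hyps Suc.prems by auto
    show "\<forall>i\<in>{Suc a..<b} - {Suc a..b - j}. f i = 0"
    proof
      fix i assume "i \<in> {Suc a..<b} - {Suc a..b - j}"
      then have "b - i < j" by auto
      then have "W0 i b j = 0" by (rule W0_zero[OF Suc.hyps])
      then show "f i = 0" unfolding f_def by simp
    qed
  qed
  also have "\<dots> = (\<Sum>i\<in>{0..N}. f (i + Suc a))"
  proof -
    have e: "{Suc a..b - j} = {0 + Suc a..N + Suc a}" using bj by simp
    show ?thesis unfolding e by (rule sum.shift_bounds_cl_nat_ivl)
  qed
  also have "\<dots> = (\<Sum>i\<in>{0..N}. fps_nth Dl i * fps_nth (Dl^j) (N - i))"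
  proof (intro sum.cong refl)
    fix i assume i: "i \<in> {0..N}"
    have "j \<le> b - (i + Suc a)" using i bj by auto
    then have "(of_nat (W0 (i + Suc a) b j) :: rat) = fps_nth (Dl^j) (b - (i + Suc a) - j)" by (rule Suc.IH)
    moreover have "b - (i + Suc a) - j = N - i" using i bj by auto
    ultimately show "f (i + Suc a) = fps_nth Dl i * fps_nth (Dl^j) (N - i)"
      unfolding f_def by (simp add: Dl_def)
  qed
  also have "\<dots> = fps_nth (Dl^Suc j) N" by (simp add: fps_mult_nth)
  finally show ?case unfolding N_def .
qed


lemma sum_by_card:
  fixes h :: "nat \<Rightarrow> nat" and g :: "nat set \<Rightarrow> nat"
  assumes ab: "a < b"
  shows "(\<Sum>S\<in>{S. S \<subseteq> {a..<b} \<and> a \<in> S}. h (card S) * g S) =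
         (\<Sum>j\<in>{1..b-a}. h j * (\<Sum>S\<in>SS a b j. g S))"
proof -
  have cover: "{S. S \<subseteq> {a..<b} \<and> a \<in> S} = (\<Union>j\<in>{1..b-a}. SS a b j)"
  proof
    show "{S. S \<subseteq> {a..<b} \<and> a \<in> S} \<subseteq> (\<Union>j\<in>{1..b-a}. SS a b j)"
    proof
      fix S assume "S \<in> {S. S \<subseteq> {a..<b} \<and> a \<in> S}"
      then have S: "S \<subseteq> {a..<b}" "a \<in> S" by auto
      have fS: "finite S" using S(1) finite_subset by blast
      have "card S \<le> b - a" using card_mono[OF _ S(1)] by simp
      moreover have "1 \<le> card S" using S(2) fS by (metis One_nat_def Suc_leI card_gt_0_iff empty_iff)
      ultimately show "S \<in> (\<Union>j\<in>{1..b-a}. SS a b j)" unfolding SS_def using S by auto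
    qed
    show "(\<Union>j\<in>{1..b-a}. SS a b j) \<subseteq> {S. S \<subseteq> {a..<b} \<and> a \<in> S}" unfolding SS_def by auto
  qed
  have "(\<Sum>S\<in>{S. S \<subseteq> {a..<b} \<and> a \<in> S}. h (card S) * g S) =
        (\<Sum>j\<in>{1..b-a}. \<Sum>S\<in>SS a b j. h (card S) * g S)"
    unfolding cover by (rule sum.UNION_disjoint) (auto simp: SS_finite SS_def)
  also have "\<dots> = (\<Sum>j\<in>{1..b-a}. h j * (\<Sum>S\<in>SS a b j. g S))"
  proof (intro sum.cong refl)
    fix j assume "j \<in> {1..b-a}"
    have "(\<Sum>S\<in>SS a b j. h (card S) * g S) = (\<Sum>S\<in>SS a b j. h j * g S)"
      by (rule sum.cong) (auto simp: SS_def)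
    then show "(\<Sum>S\<in>SS a b j. h (card S) * g S) = h j * (\<Sum>S\<in>SS a b j. g S)"
      by (simp add: sum_distrib_left)
  qed
  finally show ?thesis .
qed

lemma count_interval:
  assumes ab: "a < b"
  shows "card {G. matching {a..<b} G \<and> \<Phi> (num_components G)} =
    (\<Sum>j\<in>{1..b-a}. cc j * (\<Sum>S\<in>SS a b j. card (gpH (\<lambda>k. \<Phi> (Suc k)) a b S)))"
proof -
  interpret rootsetup "{a..<b}" using ab by unfold_locales auto
  have m: "Min {a..<b} = a" using ab by (intro Min_eqI) auto
  have "card {G. matching {a..<b} G \<and> \<Phi> (num_components G)} =
    (\<Sum>S\<in>{S. S \<subseteq> {a..<b} \<and> a \<in> S}. cc (card S) * card (gpH (\<lambda>k. \<Phi> (Suc k)) a b S))"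
    using count_root[of \<Phi>] unfolding m gpH_def by simp
  also have "\<dots> = (\<Sum>j\<in>{1..b-a}. cc j * (\<Sum>S\<in>SS a b j. card (gpH (\<lambda>k. \<Phi> (Suc k)) a b S)))"
    by (rule sum_by_card[OF ab])
  finally show ?thesis .
qed

lemma dd_root:
  assumes ab: "a < b"
  shows "dd (b - a) = (\<Sum>j\<in>{1..b-a}. cc j * W0 a b j)"
proof -
  have "dd (b - a) = card {G. matching {a..<b} G \<and> (\<lambda>_. True) (num_components G)}"
    using card_match_gen[of "{a..<b}"] by simp
  also have "\<dots> = (\<Sum>j\<in>{1..b-a}. cc j * W0 a b j)"
    using count_interval[OF ab, of "\<lambda>_. True"] unfolding W0_def by simp
  finally show ?thesis .
qed

lemma ee_root:
  assumes ab: "a < b"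
  shows "card {G. matching {a..<b} G \<and> num_components G \<le> 2} = (\<Sum>j\<in>{1..b-a}. cc j * W1 a b j)"
proof -
  have e: "(\<lambda>k. Suc k \<le> 2) = (\<lambda>k. k \<le> (1::nat))" by auto
  show ?thesis
    using count_interval[OF ab, of "\<lambda>k. k \<le> 2"] unfolding W1_def e by simp
qed


definition DD :: "rat fps" where "DD = Abs_fps (\<lambda>n. of_nat (dd (2*n)))"
definition CC :: "rat fps" where "CC = Abs_fps (\<lambda>n. of_nat (cc (2*n)))"

lemma compose_X2_nth:
  "fps_nth (F oo fps_X^2) m = (if even m then fps_nth F (m div 2) else (0::rat))"
proof -
  have "fps_nth (F oo fps_X^2) m = (\<Sum>i=0..m. fps_nth F i * (if m = 2*i then 1 else 0))"
    unfolding fps_compose_nth by (simp add: power_mult[symmetric])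
  also have "\<dots> = (\<Sum>i\<in>{0..m}. if i = m div 2 \<and> even m then fps_nth F i else 0)"
    by (intro sum.cong refl) auto
  also have "\<dots> = (if even m then fps_nth F (m div 2) else 0)"
    by (cases "even m") (auto simp: sum.delta)
  finally show ?thesis .
qed

lemma Dl_compose: "Dl = DD oo fps_X^2"
proof (rule fps_ext)
  fix m
  show "fps_nth Dl m = fps_nth (DD oo fps_X^2) m"
    unfolding compose_X2_nth by (auto simp: Dl_def DD_def dd_odd)
qed

lemma Dl_pow_even: "fps_nth (Dl^j) (2*N) = fps_nth (DD^j) N"
proof -
  have "Dl^j = DD^j oo fps_X^2" unfolding Dl_compose by (rule fps_compose_power) simp
  then show ?thesis by (simp add: compose_X2_nth)
qed

lemma sum_even:
  fixes g :: "nat \<Rightarrow> rat"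
  assumes odd0: "\<And>j. odd j \<Longrightarrow> g j = 0"
  shows "(\<Sum>j\<in>{1..2*n}. g j) = (\<Sum>k\<in>{1..n}. g (2*k))"
proof -
  have inj: "inj_on (\<lambda>k. 2*k) {1..n::nat}" by (auto simp: inj_on_def)
  have "(\<Sum>k\<in>{1..n}. g (2*k)) = (\<Sum>j\<in>(\<lambda>k. 2*k) ` {1..n}. g j)"
    using sum.reindex[OF inj, of g] by (simp add: o_def)
  also have "\<dots> = (\<Sum>j\<in>{1..2*n}. g j)"
  proof (rule sum.mono_neutral_left)
    show "finite {1..2*n}" by simp
    show "(\<lambda>k. 2*k) ` {1..n} \<subseteq> {1..2*n}" by auto
    show "\<forall>i\<in>{1..2*n} - (\<lambda>k. 2*k) ` {1..n}. g i = 0"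
    proof
      fix i assume i: "i \<in> {1..2*n} - (\<lambda>k. 2*k) ` {1..n}"
      have "odd i"
      proof
        assume "even i"
        then obtain k where "i = 2*k" by blast
        then have "i \<in> (\<lambda>k. 2*k) ` {1..n}" using i by auto
        then show False using i by blast
      qed
      then show "g i = 0" by (rule odd0)
    qed
  qed
  finally show ?thesis by simp
qed

lemma T_pow_nth:
  "k \<le> n \<Longrightarrow> fps_nth ((fps_X * DD^2)^k) n = fps_nth (DD^(2*k)) (n - k)"
  by (simp add: power_mult_distrib power_mult fps_X_power_mult_nth)

lemma DC: "DD = 1 + (CC oo (fps_X * DD^2))"
proof (rule fps_ext)
  fix n
  show "fps_nth DD n = fps_nth (1 + (CC oo (fps_X * DD^2))) n"
  proof (cases "n = 0")
    case True then show ?thesis by (simp add: DD_def CC_def dd_0 cc_0)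
  next
    case False
    then have n: "0 < n" by simp
    have "(of_nat (dd (2*n)) :: rat) = of_nat (\<Sum>j\<in>{1..2*n}. cc j * W0 1 (2*n+1) j)"
      using dd_root[of 1 "2*n+1"] n by simp
    also have "\<dots> = (\<Sum>j\<in>{1..2*n}. of_nat (cc j) * fps_nth (Dl^j) (2*n - j))"
      by (simp add: W0_formula)
    also have "\<dots> = (\<Sum>k\<in>{1..n}. of_nat (cc (2*k)) * fps_nth (Dl^(2*k)) (2*n - 2*k))"
      by (rule sum_even) (simp add: cc_odd)
    also have "\<dots> = (\<Sum>k\<in>{1..n}. fps_nth CC k * fps_nth ((fps_X * DD^2)^k) n)"
    proof (intro sum.cong refl)
      fix k assume k: "k \<in> {1..n}"
      have "2*n - 2*k = 2*(n-k)" by simp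
      then show "of_nat (cc (2*k)) * fps_nth (Dl^(2*k)) (2*n - 2*k) = fps_nth CC k * fps_nth ((fps_X * DD^2)^k) n"
        using k by (simp add: Dl_pow_even T_pow_nth CC_def)
    qed
    also have "\<dots> = (\<Sum>k\<in>{0..n}. fps_nth CC k * fps_nth ((fps_X * DD^2)^k) n)"
      by (rule sum.mono_neutral_left) (auto simp: CC_def cc_0 Suc_le_eq)
    also have "\<dots> = fps_nth (CC oo (fps_X * DD^2)) n" by (simp add: fps_compose_nth)
    finally show ?thesis using n by (simp add: DD_def)
  qed
qed


lemma dd_2: "dd 2 = 1"
  using dd_rec[of 0] dd_0 by (simp add: numeral_2_eq_2)

lemma ODE: "DD - 1 = fps_X * DD + 2 * fps_X^2 * fps_deriv DD"
proof (rule fps_ext)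
  fix n
  show "fps_nth (DD - 1) n = fps_nth (fps_X * DD + 2 * fps_X^2 * fps_deriv DD) n"
  proof (cases n)
    case 0 then show ?thesis by (simp add: DD_def dd_0)
  next
    case (Suc m)
    show ?thesis
    proof (cases m)
      case 0 then show ?thesis using Suc by (simp add: DD_def dd_0 dd_2 fps_X_power_mult_nth mult.assoc)
    next
      case (Suc k)
      have e: "2 * Suc (Suc k) = Suc (Suc (2 * Suc k))" by simp
      have r0: "dd (2 * Suc (Suc k)) = Suc (2 * Suc k) * dd (2 * Suc k)"
        unfolding e by (rule dd_rec)
      have e3: "Suc (2 * Suc k) = 2*k+3" by simp
      have r: "dd (2 * Suc (Suc k)) = (2*k+3) * dd (2 * Suc k)" using r0 unfolding e3 .
      have "fps_nth (2 * fps_X^2 * fps_deriv DD) n = 2 * fps_nth (fps_deriv DD) k"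
        using \<open>n = Suc m\<close> Suc by (simp add: mult.assoc fps_X_power_mult_nth numeral_fps_const)
      then show ?thesis using \<open>n = Suc m\<close> Suc r by (simp add: DD_def algebra_simps)
    qed
  qed
qed

lemma ii_0: "ii 0 = 0"
  unfolding ii_def indecomposable_def by simp

lemma I0_eq: "I0 = Abs_fps (\<lambda>n. of_nat (ii n))"
  unfolding I0_def ii_def ..

lemma ID: "I0 * DD = DD - 1"
proof (rule fps_ext)
  fix n
  show "fps_nth (I0 * DD) n = fps_nth (DD - 1) n"
  proof (cases "n = 0")
    case True then show ?thesis by (simp add: I0_eq DD_def dd_0 ii_0)
  next
    case False
    then have n: "0 < n" by simp
    have "fps_nth (I0 * DD) n = (\<Sum>i=0..n. of_nat (ii i) * of_nat (dd (2*(n-i))))"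
      by (simp add: fps_mult_nth I0_eq DD_def)
    also have "\<dots> = (\<Sum>i=1..n. of_nat (ii i) * of_nat (dd (2*(n-i))))"
      by (rule sum.mono_neutral_right) (auto simp: ii_0 Suc_le_eq)
    also have "\<dots> = of_nat (dd (2*n))" using dd_indec[OF n] by simp
    finally show ?thesis using n by (simp add: DD_def)
  qed
qed

lemma chord_le2: "card {C. chord_diagram n C \<and> num_components C \<le> 2} =
   card {G. matching {1..<2*n+1} G \<and> num_components G \<le> 2}"
proof -
  have "{1..2*n} = {1..<2*n+1::nat}" by auto
  then show ?thesis unfolding cd_iff by simp
qed

lemma EC: "D_le2 = 1 + CC + 2 * fps_X * CC * fps_deriv CC"
proof (rule fps_ext)
  fix n
  show "fps_nth D_le2 n = fps_nth (1 + CC + 2 * fps_X * CC * fps_deriv CC) n"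
  proof (cases "n = 0")
    case True
    have e0: "{1..2*0} = ({}::nat set)" by simp
    have "{C. chord_diagram 0 C \<and> num_components C \<le> 2} = {{}}"
      unfolding cd_iff e0 matching_emptyset by auto
    then show ?thesis using True by (simp add: D_le2_def CC_def cc_0)
  next
    case False
    then have n: "0 < n" by simp
    have "fps_nth D_le2 n = of_nat (\<Sum>j\<in>{1..2*n}. cc j * W1 1 (2*n+1) j)"
      unfolding D_le2_def chord_le2 using ee_root[of 1 "2*n+1"] n by simp
    also have "\<dots> = (\<Sum>j\<in>{1..2*n}. of_nat (cc j) * ((if j = 2*n then 1 else 0) + of_nat j * of_nat (cc (2*n - j))))"
      unfolding of_nat_sum by (intro sum.cong refl) (simp add: W1_formula)
    also have "\<dots> = (\<Sum>j\<in>{1..2*n}. (if j = 2*n then of_nat (cc j) else 0) +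
        of_nat j * of_nat (cc j) * of_nat (cc (2*n - j)))"
      by (intro sum.cong refl) (simp add: algebra_simps)
    also have "\<dots> = (\<Sum>j\<in>{1..2*n}. (if j = 2*n then of_nat (cc j) else 0)) +
        (\<Sum>j\<in>{1..2*n}. of_nat j * of_nat (cc j) * of_nat (cc (2*n - j)))"
      by (rule sum.distrib)
    also have "(\<Sum>j\<in>{1..2*n}. (if j = 2*n then of_nat (cc j) else (0::rat))) = of_nat (cc (2*n))"
      using n by (simp add: sum.delta')
    also have "(\<Sum>j\<in>{1..2*n}. of_nat j * of_nat (cc j) * of_nat (cc (2*n - j))) =
        (\<Sum>k\<in>{1..n}. of_nat (2*k) * of_nat (cc (2*k)) * (of_nat (cc (2*n - 2*k)) :: rat))"
      by (rule sum_even) (simp add: cc_odd)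
    also have "\<dots> = 2 * (\<Sum>i=0..n. fps_nth (fps_X * fps_deriv CC) i * fps_nth CC (n - i))"
    proof -
      have "(\<Sum>i=0..n. fps_nth (fps_X * fps_deriv CC) i * fps_nth CC (n - i)) =
            (\<Sum>i=1..n. fps_nth (fps_X * fps_deriv CC) i * fps_nth CC (n - i))"
        by (rule sum.mono_neutral_right) (auto simp: Suc_le_eq)
      also have "\<dots> = (\<Sum>k\<in>{1..n}. of_nat k * of_nat (cc (2*k)) * (of_nat (cc (2*n - 2*k)) :: rat))"
      proof (intro sum.cong refl)
        fix i assume i: "i \<in> {1..n}"
        then obtain p where p: "i = Suc p" by (cases i) auto
        have "2*n - 2*i = 2*(n-i)" by simp
        then show "fps_nth (fps_X * fps_deriv CC) i * fps_nth CC (n - i) = of_nat i * of_nat (cc (2*i)) * of_nat (cc (2*n - 2*i))"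
          using p by (simp add: CC_def)
      qed
      finally show ?thesis by (simp add: sum_distrib_left algebra_simps)
    qed
    also have "of_nat (cc (2*n)) + 2 * (\<Sum>i=0..n. fps_nth (fps_X * fps_deriv CC) i * fps_nth CC (n - i)) =
       fps_nth (1 + CC + 2 * fps_X * CC * fps_deriv CC) n"
    proof -
      have e: "2 * fps_X * CC * fps_deriv CC = 2 * ((fps_X * fps_deriv CC) * CC)" by (simp add: algebra_simps)
      have m: "fps_nth ((fps_X * fps_deriv CC) * CC) n = (\<Sum>i=0..n. fps_nth (fps_X * fps_deriv CC) i * fps_nth CC (n - i))"
        by (rule fps_mult_nth)
      have "fps_nth (1 + CC + 2 * ((fps_X * fps_deriv CC) * CC)) n =
          of_nat (cc (2*n)) + 2 * fps_nth ((fps_X * fps_deriv CC) * CC) n"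
        using n by (simp add: CC_def numeral_fps_const del: fps_X_mult_nth)
      then show ?thesis unfolding e m by simp
    qed
    finally show ?thesis .
  qed
qed


theorem corollary3p6p4:
  fixes B :: "rat fps"
  assumes "B = D_le2 + fps_X"
  shows "(\<exists>!Z :: rat fps. fps_nth Z 0 = 0 \<and> Z = fps_X * (B oo Z)) \<and>
         (\<forall>Z :: rat fps. fps_nth Z 0 = 0 \<and> Z = fps_X * (B oo Z) \<longrightarrow>
            I0 = fps_X / (1 - fps_X * (fps_deriv B oo Z)))"
proof (rule alg_main[of DD I0 CC D_le2 B])
  show "fps_nth DD 0 = 1" by (simp add: DD_def dd_0)
  show "DD - 1 = fps_X * DD + 2 * fps_X^2 * fps_deriv DD" by (rule ODE)
  show "I0 * DD = DD - 1" by (rule ID)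
  show "fps_nth CC 0 = 0" by (simp add: CC_def cc_0)
  show "DD = 1 + (CC oo (fps_X * DD^2))" by (rule DC)
  show "D_le2 = 1 + CC + 2 * fps_X * CC * fps_deriv CC" by (rule EC)
  show "B = D_le2 + fps_X" by (rule assms)
qed


end
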